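(* Suppose the seller knows the type $s$, so that the agents' valuations are i.i.d. draws from $F_s$, and $F_s$ is regular. Then a revenue-optimal $T$-round mechanism is the second price auction with the constant reserve $r^\star_s$ in every round, where $r^\star_s$ is the unique solution of $$r-\frac{1-F_s(r)}{f_s(r)}=0.$$ In particular, no mechanism that varies the reserve price over time (depending on past bids) obtains higher expected revenue.
   Context: Setting: a seller sells $T$ items, one per round $t=1,\dots,T$, to $n\ge1$ agents. Given the type $s$, each agent $i$ has a private valuation $v_i$ drawn independently from $F_s$, which has density $f_s$. The valuation $v_i$ is constant across rounds. In each round, agent $i$ participates independently (across agents and rounds) with probability $\alpha_i$. It learns its participation indicator at the start of the round. The $\alpha_i$ are common knowledge. The second price auction with reserve $r$ is defined as follows. If all participants' bids are below $r$, the item is not allocated. Otherwise it goes to a highest bidder (ties broken uniformly at random), who pays the maximum of $r$ and the highest other bid. Agents maximize $\mathbb{E}[\sum_t (v_iq_{it}-p_{it})]$, where $q_{it}$ is the allocation indicator and $p_{it}$ the payment. The seller maximizes expected total payments in equilibrium. A distribution $F_s$ with density $f_s$ is regular if both $F_s(v)$ and $v-\frac{1-F_s(v)}{f_s(v)}$ are strictly increasing in $v$ on the support of $F_s$. *)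

theory Defs
  imports "HOL-Probability.Probability"
begin

definition cdf :: "(real \<Rightarrow> real) \<Rightarrow> real \<Rightarrow> real" where
  "cdf f x = integral {..x} f"

definition virt :: "(real \<Rightarrow> real) \<Rightarrow> real \<Rightarrow> real" where
  "virt f v = v - (1 - cdf f v) / f v"

definition density_with_support :: "(real \<Rightarrow> real) \<Rightarrow> real set \<Rightarrow> bool" where
  "density_with_support f S \<longleftrightarrow>
     f \<in> borel_measurable borel \<and> (\<forall>x. 0 \<le> f x) \<and> (f has_integral 1) UNIV \<and>
     is_interval S \<and> (\<forall>x\<in>S. 0 < f x) \<and> (\<forall>x. x \<notin> S \<longrightarrow> f x = 0)"

definition regular :: "(real \<Rightarrow> real) \<Rightarrow> real set \<Rightarrow> bool" where
  "regular f S \<longleftrightarrow> strict_mono_on S (cdf f) \<and> strict_mono_on S (virt f)"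

definition valM :: "(real \<Rightarrow> real) \<Rightarrow> real measure" where
  "valM f = density lborel (\<lambda>x. ennreal (f x))"

definition profM :: "(real \<Rightarrow> real) \<Rightarrow> nat \<Rightarrow> (nat \<Rightarrow> real) measure" where
  "profM f n = PiM {..<n} (\<lambda>_. valM f)"

text \<open>A participation realisation is the set z of pairs (t,i) such that agent i participates
  in round t.  Its probability, with independent participation of agent i with prob. alpha i.\<close>
definition partsets :: "nat \<Rightarrow> nat \<Rightarrow> (nat \<times> nat) set set" where
  "partsets n T = Pow ({..<T} \<times> {..<n})"

definition pweight :: "(nat \<Rightarrow> real) \<Rightarrow> nat \<Rightarrow> nat \<Rightarrow> (nat \<times> nat) set \<Rightarrow> real" where
  "pweight \<alpha> n T z = (\<Prod>(t,i)\<in>{..<T} \<times> {..<n}. if (t,i) \<in> z then \<alpha> i else 1 - \<alpha> i)"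

definition Ez :: "(nat \<Rightarrow> real) \<Rightarrow> nat \<Rightarrow> nat \<Rightarrow> ((nat \<times> nat) set \<Rightarrow> real) \<Rightarrow> real" where
  "Ez \<alpha> n T g = (\<Sum>z\<in>partsets n T. pweight \<alpha> n T z * g z)"

text \<open>A mechanism is given by
  q b z t i : probability that agent i gets the item of round t,
  p b z i   : expected total payment of agent i,
  as functions of the reported valuation profile b and the participation realisation z.
  (By the revelation principle this class contains every T-round mechanism together with
  any equilibrium of it, including auctions whose reserve depends on past bids.)\<close>
type_synonym alloc = "(nat \<Rightarrow> real) \<Rightarrow> (nat \<times> nat) set \<Rightarrow> nat \<Rightarrow> nat \<Rightarrow> real"
type_synonym pay = "(nat \<Rightarrow> real) \<Rightarrow> (nat \<times> nat) set \<Rightarrow> nat \<Rightarrow> real"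

definition util :: "(real \<Rightarrow> real) \<Rightarrow> (nat \<Rightarrow> real) \<Rightarrow> nat \<Rightarrow> nat \<Rightarrow> alloc \<Rightarrow> pay
    \<Rightarrow> nat \<Rightarrow> real \<Rightarrow> real \<Rightarrow> real" where
  "util f \<alpha> n T q p i x y =
     (\<integral>v. Ez \<alpha> n T (\<lambda>z. x * (\<Sum>t<T. q (v(i := y)) z t i) - p (v(i := y)) z i) \<partial>profM f n)"

definition revenue :: "(real \<Rightarrow> real) \<Rightarrow> (nat \<Rightarrow> real) \<Rightarrow> nat \<Rightarrow> nat \<Rightarrow> alloc \<Rightarrow> pay \<Rightarrow> real" where
  "revenue f \<alpha> n T q p = (\<integral>v. Ez \<alpha> n T (\<lambda>z. \<Sum>i<n. p v z i) \<partial>profM f n)"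

definition admissible :: "(real \<Rightarrow> real) \<Rightarrow> real set \<Rightarrow> (nat \<Rightarrow> real) \<Rightarrow> nat \<Rightarrow> nat
    \<Rightarrow> alloc \<Rightarrow> pay \<Rightarrow> bool" where
  "admissible f S \<alpha> n T q p \<longleftrightarrow>
     (\<forall>b z t i. 0 \<le> q b z t i) \<and>
     (\<forall>b z t. (\<Sum>i<n. q b z t i) \<le> 1) \<and>
     (\<forall>b z t i. (t, i) \<notin> z \<longrightarrow> q b z t i = 0) \<and>
     (\<forall>z t i. (\<lambda>v. q v z t i) \<in> borel_measurable (profM f n)) \<and>
     (\<forall>z i. integrable (profM f n) (\<lambda>v. p v z i)) \<and>
     (\<forall>i<n. \<forall>y\<in>S. \<forall>z t. (\<lambda>v. q (v(i := y)) z t i) \<in> borel_measurable (profM f n)) \<and>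
     (\<forall>i<n. \<forall>y\<in>S. \<forall>z. integrable (profM f n) (\<lambda>v. p (v(i := y)) z i)) \<and>
     (\<forall>i<n. \<forall>x\<in>S. \<forall>y\<in>S. util f \<alpha> n T q p i x y \<le> util f \<alpha> n T q p i x x) \<and>
     (\<forall>i<n. \<forall>x\<in>S. 0 \<le> util f \<alpha> n T q p i x x)"

definition spa_winners :: "nat \<Rightarrow> real \<Rightarrow> (nat \<Rightarrow> real) \<Rightarrow> (nat \<times> nat) set \<Rightarrow> nat \<Rightarrow> nat set" where
  "spa_winners n r b z t =
     {j. j < n \<and> (t, j) \<in> z \<and> r \<le> b j \<and> (\<forall>k<n. (t, k) \<in> z \<longrightarrow> b k \<le> b j)}"

definition spa_alloc :: "nat \<Rightarrow> real \<Rightarrow> alloc" where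
  "spa_alloc n r b z t i =
     (if i \<in> spa_winners n r b z t then 1 / real (card (spa_winners n r b z t)) else 0)"

definition spa_price :: "nat \<Rightarrow> real \<Rightarrow> (nat \<Rightarrow> real) \<Rightarrow> (nat \<times> nat) set \<Rightarrow> nat \<Rightarrow> nat \<Rightarrow> real" where
  "spa_price n r b z t i = Max (insert r {b j | j. j < n \<and> (t, j) \<in> z \<and> j \<noteq> i})"

definition spa_round_pay :: "nat \<Rightarrow> real \<Rightarrow> (nat \<Rightarrow> real) \<Rightarrow> (nat \<times> nat) set \<Rightarrow> nat \<Rightarrow> nat \<Rightarrow> real" where
  "spa_round_pay n r b z t i = spa_alloc n r b z t i * spa_price n r b z t i"

definition spa_pay :: "nat \<Rightarrow> nat \<Rightarrow> real \<Rightarrow> pay" where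
  "spa_pay n T r b z i = (\<Sum>t<T. spa_round_pay n r b z t i)"

end

theory Submission
  imports Defs
begin

lemma spa_winners_sub: "spa_winners n r b z t \<subseteq> {..<n}"
  by (auto simp: spa_winners_def)

lemma spa_winners_finite[simp]: "finite (spa_winners n r b z t)"
  by (rule finite_subset[OF spa_winners_sub]) simp

lemma spa_alloc_nonneg: "0 \<le> spa_alloc n r b z t i"
  by (simp add: spa_alloc_def)

lemma spa_alloc_le1: "spa_alloc n r b z t i \<le> 1"
proof -
  have "i \<in> spa_winners n r b z t \<Longrightarrow> 1 \<le> card (spa_winners n r b z t)"
    by (metis One_nat_def Suc_leI card_gt_0_iff empty_iff spa_winners_finite)
  then show ?thesis by (auto simp: spa_alloc_def)
qed

lemma spa_alloc_nonpart: "(t, i) \<notin> z \<Longrightarrow> spa_alloc n r b z t i = 0"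
  by (auto simp: spa_alloc_def spa_winners_def)

lemma spa_alloc_ge_n: "\<not> i < n \<Longrightarrow> spa_alloc n r b z t i = 0"
  by (auto simp: spa_alloc_def spa_winners_def)

lemma spa_alloc_sum: "(\<Sum>i<n. spa_alloc n r b z t i) \<le> 1"
proof -
  let ?W = "spa_winners n r b z t"
  have "(\<Sum>i<n. spa_alloc n r b z t i) = (\<Sum>i\<in>?W. 1 / real (card ?W))"
    unfolding spa_alloc_def
    by (subst sum.If_cases) (auto simp: Int_absorb1[OF spa_winners_sub] Int_commute)
  also have "\<dots> \<le> 1" by (cases "?W = {}") auto
  finally show ?thesis .
qed

lemma spa_price_indep: "spa_price n r (b(i := v)) z t i = spa_price n r b z t i"
  unfolding spa_price_def
  by (rule arg_cong[where f=Max], auto)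

lemma spa_price_set_eq: fixes b :: "nat \<Rightarrow> real" shows "{b j | j. j < n \<and> (t, j) \<in> z \<and> j \<noteq> i} = b ` {j. j < n \<and> (t, j) \<in> z \<and> j \<noteq> i}"
  by auto

lemma spa_price_fin: fixes b :: "nat \<Rightarrow> real" and r :: real shows "finite (insert r {b j | j. j < n \<and> (t, j) \<in> z \<and> j \<noteq> i})"
proof -
  have "{j. j < n \<and> (t, j) \<in> z \<and> j \<noteq> i} \<subseteq> {..<n}" by auto
  then have "finite {j. j < n \<and> (t, j) \<in> z \<and> j \<noteq> i}" by (rule finite_subset) simp
  then show ?thesis unfolding spa_price_set_eq by simp
qed

lemma spa_price_ge_r: "r \<le> spa_price n r b z t i"
  unfolding spa_price_def by (rule Max_ge[OF spa_price_fin]) auto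

lemma spa_price_ge_other: "k < n \<Longrightarrow> (t, k) \<in> z \<Longrightarrow> k \<noteq> i \<Longrightarrow> b k \<le> spa_price n r b z t i"
  unfolding spa_price_def by (rule Max_ge[OF spa_price_fin]) auto

lemma spa_price_le_winner:
  assumes "i \<in> spa_winners n r b z t"
  shows "spa_price n r b z t i \<le> b i"
  unfolding spa_price_def using assms
  by (intro Max.boundedI[OF spa_price_fin]) (auto simp: spa_winners_def)

lemma spa_round_pay_alt: "spa_round_pay n r b z t i = spa_alloc n r b z t i * spa_price n r b z t i"
  by (simp add: spa_round_pay_def)

lemma spa_truthful:
  assumes i: "i < n"
  shows "v * spa_alloc n r b z t i - spa_round_pay n r b z t i
          \<le> v * spa_alloc n r (b(i := v)) z t i - spa_round_pay n r (b(i := v)) z t i"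
proof -
  let ?p = "spa_price n r b z t i"
  let ?a = "spa_alloc n r b z t i"
  let ?a' = "spa_alloc n r (b(i := v)) z t i"
  have L: "v * ?a - spa_round_pay n r b z t i = ?a * (v - ?p)"
    by (simp add: spa_round_pay_def algebra_simps)
  have R: "v * ?a' - spa_round_pay n r (b(i := v)) z t i = ?a' * (v - ?p)"
    by (simp add: spa_round_pay_def spa_price_indep algebra_simps)
  show ?thesis
  proof (cases "i \<in> spa_winners n r (b(i := v)) z t")
    case True
    then have vp: "?p \<le> v" using spa_price_le_winner[OF True] spa_price_indep[of n r b i v z t] by simp
    show ?thesis
    proof (cases "?p = v")
      case True then show ?thesis using L R by simp
    next
      case False
      then have vp': "?p < v" using vp by simp
      have "spa_winners n r (b(i := v)) z t = {i}"
      proof (safe)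
        fix j assume j: "j \<in> spa_winners n r (b(i := v)) z t"
        show "j = i"
        proof (rule ccontr)
          assume ji: "j \<noteq> i"
          from j ji have "j < n" "(t, j) \<in> z" "b j \<ge> v"
            using True by (auto simp: spa_winners_def)
          then have "b j \<le> ?p" using spa_price_ge_other ji by blast
          then show False using vp' \<open>b j \<ge> v\<close> by simp
        qed
      qed (use True in auto)
      then have "?a' = 1" by (simp add: spa_alloc_def)
      moreover have "?a \<le> 1" by (rule spa_alloc_le1)
      ultimately show ?thesis using L R vp' spa_alloc_nonneg[of n r b z t i]
        by (simp add: mult_right_mono)
    qed
  next
    case False
    then have a'0: "?a' = 0" by (simp add: spa_alloc_def)
    show ?thesis
    proof (cases "i \<in> spa_winners n r b z t")
      case False then show ?thesis using L R a'0 by (simp add: spa_alloc_def)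
    next
      case True
      then have part: "(t, i) \<in> z" by (simp add: spa_winners_def)
      have "v < ?p"
      proof (cases "r \<le> v")
        case False then show ?thesis using spa_price_ge_r[of r n b z t i] by simp
      next
        case rv: True
        from \<open>i \<notin> spa_winners n r (b(i := v)) z t\<close> i part rv
        obtain k where k: "k < n" "(t, k) \<in> z" "(b(i := v)) k > v"
          by (auto simp: spa_winners_def not_le)
        then have ki: "k \<noteq> i" by auto
        with k have "b k > v" by simp
        moreover have "b k \<le> ?p" using spa_price_ge_other[OF k(1,2) ki] .
        ultimately show ?thesis by simp
      qed
      then show ?thesis using L R a'0 spa_alloc_nonneg[of n r b z t i]
        by (simp add: mult_nonneg_nonpos)
    qed
  qed
qed


lemma distr_add_dim_eq:
  assumes probM: "prob_space M" and I: "finite I" "i \<notin> I"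
  shows "distr (PiM I (\<lambda>_. M) \<Otimes>\<^sub>M M) (PiM (insert i I) (\<lambda>_. M)) (\<lambda>(f, y). f(i := y))
       = PiM (insert i I) (\<lambda>_. M)"
proof -
  interpret product_prob_space "\<lambda>_. M" "insert i I"
    by (simp add: probM product_prob_space.intro product_prob_space_axioms.intro product_sigma_finite.intro prob_space_imp_sigma_finite)
  interpret IP: finite_product_sigma_finite "\<lambda>_. M" I by standard (use I in auto)
  interpret PP: pair_sigma_finite "PiM I (\<lambda>_. M)" M
    unfolding pair_sigma_finite_def using IP.sigma_finite_measure_axioms prob_space_imp_sigma_finite[OF probM] by simp
  show ?thesis
  proof (rule PiM_eqI)
    fix A assume A: "\<And>j. j \<in> insert i I \<Longrightarrow> A j \<in> sets M"
    have *: "(\<lambda>(f, y). f(i := y)) -` Pi\<^sub>E (insert i I) A \<inter> space (PiM I (\<lambda>_. M) \<Otimes>\<^sub>M M)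
        = Pi\<^sub>E I A \<times> A i"
      using A[THEN sets.sets_into_space] I
      by (auto simp: space_PiM space_pair_measure PiE_def Pi_def extensional_def split: if_splits)
    show "emeasure (distr (PiM I (\<lambda>_. M) \<Otimes>\<^sub>M M) (PiM (insert i I) (\<lambda>_. M)) (\<lambda>(f, y). f(i := y))) (Pi\<^sub>E (insert i I) A)
        = (\<Prod>j\<in>insert i I. emeasure M (A j))"
      using A I
      apply (subst emeasure_distr)
        apply (auto intro!: sets_PiM_I_finite measurable_add_dim[of i I "\<lambda>_. M", simplified] simp: *)
      apply (subst sigma_finite_measure.emeasure_pair_measure_Times[OF prob_space_imp_sigma_finite[OF probM]])
        apply (rule sets_PiM_I_finite, simp, simp)
       apply simp
      apply (simp add: IP.measure_times mult.commute)
      done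
  qed (use I probM in \<open>auto simp: prob_space_imp_sigma_finite\<close>)
qed

lemma restrict_upd_eq:
  assumes "v \<in> space (PiM {..<n} (\<lambda>_. M))" "i < n"
  shows "(restrict v ({..<n} - {i}))(i := x) = v(i := x)"
  using assms by (auto simp: space_PiM PiE_def extensional_def fun_eq_iff)

lemma insert_minus_lessThan: "i < n \<Longrightarrow> insert i ({..<n} - {i}) = {..<(n::nat)}"
  by auto

context
  fixes M :: "real measure" and n i :: nat
  assumes probM: "prob_space M" and i: "i < n"
begin

interpretation PP: product_prob_space "\<lambda>_. M" "{..<n}"
  by (simp add: probM product_prob_space.intro product_prob_space_axioms.intro product_sigma_finite.intro prob_space_imp_sigma_finite)

interpretation IP: finite_product_sigma_finite "\<lambda>_. M" "{..<n} - {i}" by standard auto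

interpretation PR: pair_sigma_finite "PiM ({..<n} - {i}) (\<lambda>_. M)" M
  unfolding pair_sigma_finite_def using IP.sigma_finite_measure_axioms prob_space_imp_sigma_finite[OF probM] by simp

lemma distr_restrict_minus:
  "PiM ({..<n} - {i}) (\<lambda>_. M) = distr (PiM {..<n} (\<lambda>_. M)) (PiM ({..<n} - {i}) (\<lambda>_. M)) (\<lambda>f. restrict f ({..<n} - {i}))"
  by (rule PP.distr_restrict) auto

lemma distr_upd:
  "distr (PiM ({..<n} - {i}) (\<lambda>_. M) \<Otimes>\<^sub>M M) (PiM {..<n} (\<lambda>_. M)) (\<lambda>(f, y). f(i := y))
       = PiM {..<n} (\<lambda>_. M)"
  using distr_add_dim_eq[OF probM, of "{..<n} - {i}" i] unfolding insert_minus_lessThan[OF i] by simp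

lemma meas_upd[measurable]:
  "(\<lambda>(f, y). f(i := y)) \<in> measurable (PiM ({..<n} - {i}) (\<lambda>_. M) \<Otimes>\<^sub>M M) (PiM {..<n} (\<lambda>_. M))"
  using measurable_add_dim[of i "{..<n} - {i}" "\<lambda>_. M"] unfolding insert_minus_lessThan[OF i] .

lemma meas_upd2:
  "(\<lambda>(v, y). v(i := y)) \<in> measurable (PiM {..<n} (\<lambda>_. M) \<Otimes>\<^sub>M M) (PiM {..<n} (\<lambda>_. M))"
proof -
  have "(\<lambda>p. (fst p)(i := snd p)) \<in> measurable (PiM {..<n} (\<lambda>_. M) \<Otimes>\<^sub>M M) (PiM {..<n} (\<lambda>_. M))"
    by (rule measurable_fun_upd[where J="{..<n}"]) (use i in auto)
  then show ?thesis by (simp add: case_prod_beta')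
qed

lemma meas_upd3:
  "(\<lambda>(y, v). v(i := y)) \<in> measurable (M \<Otimes>\<^sub>M PiM {..<n} (\<lambda>_. M)) (PiM {..<n} (\<lambda>_. M))"
proof -
  have "(\<lambda>p. (snd p)(i := fst p)) \<in> measurable (M \<Otimes>\<^sub>M PiM {..<n} (\<lambda>_. M)) (PiM {..<n} (\<lambda>_. M))"
    by (rule measurable_fun_upd[where J="{..<n}"]) (use i in auto)
  then show ?thesis by (simp add: case_prod_beta')
qed

lemma meas_upd_x:
  "x \<in> space M \<Longrightarrow> (\<lambda>v. v(i := x)) \<in> measurable (PiM {..<n} (\<lambda>_. M)) (PiM {..<n} (\<lambda>_. M))"
  by (rule measurable_fun_upd[where J="{..<n}"]) (use i in auto)

lemma mr: "(\<lambda>f. restrict f ({..<n} - {i})) \<in> measurable (PiM {..<n} (\<lambda>_. M)) (PiM ({..<n} - {i}) (\<lambda>_. M))"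
  by (rule measurable_restrict_subset) auto

lemma inner_nn:
  fixes G :: "(nat \<Rightarrow> real) \<Rightarrow> ennreal"
  assumes G: "G \<in> borel_measurable (PiM {..<n} (\<lambda>_. M))" and x: "x \<in> space M"
  shows "(\<integral>\<^sup>+w. G (w(i := x)) \<partial>PiM ({..<n} - {i}) (\<lambda>_. M)) = (\<integral>\<^sup>+v. G (v(i := x)) \<partial>PiM {..<n} (\<lambda>_. M))"
proof -
  have m: "(\<lambda>w. G (w(i := x))) \<in> borel_measurable (PiM ({..<n} - {i}) (\<lambda>_. M))"
  proof -
    have "(\<lambda>w. w(i := x)) \<in> measurable (PiM ({..<n} - {i}) (\<lambda>_. M)) (PiM {..<n} (\<lambda>_. M))"
      by (rule measurable_fun_upd[where J="{..<n} - {i}"]) (use i x in auto)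
    from measurable_comp[OF this G] show ?thesis by (simp add: comp_def)
  qed
  have "(\<integral>\<^sup>+w. G (w(i := x)) \<partial>PiM ({..<n} - {i}) (\<lambda>_. M))
     = (\<integral>\<^sup>+w. G (w(i := x)) \<partial>distr (PiM {..<n} (\<lambda>_. M)) (PiM ({..<n} - {i}) (\<lambda>_. M)) (\<lambda>f. restrict f ({..<n} - {i})))"
    by (rule arg_cong[where f="\<lambda>N. (\<integral>\<^sup>+w. G (w(i := x)) \<partial>N)"]) (rule distr_restrict_minus)
  also have "\<dots> = (\<integral>\<^sup>+v. G ((restrict v ({..<n} - {i}))(i := x)) \<partial>PiM {..<n} (\<lambda>_. M))"
    by (rule nn_integral_distr[OF mr]) (use m in simp)
  also have "\<dots> = (\<integral>\<^sup>+v. G (v(i := x)) \<partial>PiM {..<n} (\<lambda>_. M))"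
    by (rule nn_integral_cong) (simp only: restrict_upd_eq[OF _ i])
  finally show ?thesis .
qed

lemma inner_int:
  fixes G :: "(nat \<Rightarrow> real) \<Rightarrow> real"
  assumes G: "G \<in> borel_measurable (PiM {..<n} (\<lambda>_. M))" and x: "x \<in> space M"
  shows "(\<integral>w. G (w(i := x)) \<partial>PiM ({..<n} - {i}) (\<lambda>_. M)) = (\<integral>v. G (v(i := x)) \<partial>PiM {..<n} (\<lambda>_. M))"
proof -
  have m: "(\<lambda>w. G (w(i := x))) \<in> borel_measurable (PiM ({..<n} - {i}) (\<lambda>_. M))"
  proof -
    have "(\<lambda>w. w(i := x)) \<in> measurable (PiM ({..<n} - {i}) (\<lambda>_. M)) (PiM {..<n} (\<lambda>_. M))"
      by (rule measurable_fun_upd[where J="{..<n} - {i}"]) (use i x in auto)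
    from measurable_comp[OF this G] show ?thesis by (simp add: comp_def)
  qed
  have "(\<integral>w. G (w(i := x)) \<partial>PiM ({..<n} - {i}) (\<lambda>_. M))
     = (\<integral>w. G (w(i := x)) \<partial>distr (PiM {..<n} (\<lambda>_. M)) (PiM ({..<n} - {i}) (\<lambda>_. M)) (\<lambda>f. restrict f ({..<n} - {i})))"
    by (rule arg_cong[where f="\<lambda>N. (\<integral>w. G (w(i := x)) \<partial>N)"]) (rule distr_restrict_minus)
  also have "\<dots> = (\<integral>v. G ((restrict v ({..<n} - {i}))(i := x)) \<partial>PiM {..<n} (\<lambda>_. M))"
    by (rule integral_distr[OF mr m])
  also have "\<dots> = (\<integral>v. G (v(i := x)) \<partial>PiM {..<n} (\<lambda>_. M))"
    by (rule Bochner_Integration.integral_cong[OF refl]) (simp only: restrict_upd_eq[OF _ i])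
  finally show ?thesis .
qed

lemma swap_nn:
  fixes G :: "(nat \<Rightarrow> real) \<Rightarrow> ennreal"
  assumes G[measurable]: "G \<in> borel_measurable (PiM {..<n} (\<lambda>_. M))"
  shows "(\<integral>\<^sup>+v. G v \<partial>PiM {..<n} (\<lambda>_. M)) = (\<integral>\<^sup>+x. (\<integral>\<^sup>+v. G (v(i := x)) \<partial>PiM {..<n} (\<lambda>_. M)) \<partial>M)"
proof -
  have "(\<integral>\<^sup>+v. G v \<partial>PiM {..<n} (\<lambda>_. M)) = (\<integral>\<^sup>+p. G (case p of (w, y) \<Rightarrow> w(i := y)) \<partial>(PiM ({..<n} - {i}) (\<lambda>_. M) \<Otimes>\<^sub>M M))"
    by (subst distr_upd[symmetric]) (simp add: nn_integral_distr)
  also have "\<dots> = (\<integral>\<^sup>+x. (\<integral>\<^sup>+w. G (w(i := x)) \<partial>PiM ({..<n} - {i}) (\<lambda>_. M)) \<partial>M)"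
    by (subst PR.nn_integral_snd[symmetric]) (auto simp: case_prod_beta)
  also have "\<dots> = (\<integral>\<^sup>+x. (\<integral>\<^sup>+v. G (v(i := x)) \<partial>PiM {..<n} (\<lambda>_. M)) \<partial>M)"
    by (rule nn_integral_cong) (rule inner_nn[OF G])
  finally show ?thesis .
qed

lemma swap_int:
  fixes G :: "(nat \<Rightarrow> real) \<Rightarrow> real"
  assumes G: "integrable (PiM {..<n} (\<lambda>_. M)) G"
  shows "integrable M (\<lambda>x. \<integral>v. G (v(i := x)) \<partial>PiM {..<n} (\<lambda>_. M))"
    and "(\<integral>v. G v \<partial>PiM {..<n} (\<lambda>_. M)) = (\<integral>x. (\<integral>v. G (v(i := x)) \<partial>PiM {..<n} (\<lambda>_. M)) \<partial>M)"
proof -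
  have Gm[measurable]: "G \<in> borel_measurable (PiM {..<n} (\<lambda>_. M))" using G by auto
  have int2: "integrable (PiM ({..<n} - {i}) (\<lambda>_. M) \<Otimes>\<^sub>M M) (\<lambda>(w, y). G (w(i := y)))"
  proof -
    have "integrable (distr (PiM ({..<n} - {i}) (\<lambda>_. M) \<Otimes>\<^sub>M M) (PiM {..<n} (\<lambda>_. M)) (\<lambda>(f, y). f(i := y))) G"
      using G distr_upd by simp
    then have "integrable (PiM ({..<n} - {i}) (\<lambda>_. M) \<Otimes>\<^sub>M M) (\<lambda>p. G ((\<lambda>(f, y). f(i := y)) p))"
      by (rule integrable_distr[OF meas_upd, of G])
    then show ?thesis by (simp add: case_prod_beta')
  qed
  have eq1: "(\<integral>v. G v \<partial>PiM {..<n} (\<lambda>_. M)) = (\<integral>p. G (case p of (w, y) \<Rightarrow> w(i := y)) \<partial>(PiM ({..<n} - {i}) (\<lambda>_. M) \<Otimes>\<^sub>M M))"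
    by (subst distr_upd[symmetric]) (simp add: integral_distr)
  have c: "\<And>x. x \<in> space M \<Longrightarrow> (\<integral>w. G (w(i := x)) \<partial>PiM ({..<n} - {i}) (\<lambda>_. M)) = (\<integral>v. G (v(i := x)) \<partial>PiM {..<n} (\<lambda>_. M))"
    by (rule inner_int[OF Gm])
  show "integrable M (\<lambda>x. \<integral>v. G (v(i := x)) \<partial>PiM {..<n} (\<lambda>_. M))"
  proof -
    have ii: "integrable M (\<lambda>x. \<integral>w. G (w(i := x)) \<partial>PiM ({..<n} - {i}) (\<lambda>_. M))"
      using PR.integrable_snd[OF int2] by simp
    show ?thesis by (rule Bochner_Integration.integrable_cong[OF refl, THEN iffD1, OF _ ii]) (simp add: c)
  qed
  show "(\<integral>v. G v \<partial>PiM {..<n} (\<lambda>_. M)) = (\<integral>x. (\<integral>v. G (v(i := x)) \<partial>PiM {..<n} (\<lambda>_. M)) \<partial>M)"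
  proof -
    have "(\<integral>x. (\<integral>v. G (v(i := x)) \<partial>PiM {..<n} (\<lambda>_. M)) \<partial>M) = (\<integral>x. (\<integral>w. G (w(i := x)) \<partial>PiM ({..<n} - {i}) (\<lambda>_. M)) \<partial>M)"
      by (rule Bochner_Integration.integral_cong[OF refl]) (simp add: c)
    also have "\<dots> = integral\<^sup>L (PiM ({..<n} - {i}) (\<lambda>_. M) \<Otimes>\<^sub>M M) (\<lambda>(w, y). G (w(i := y)))"
      by (rule PR.integral_snd[OF int2])
    finally show ?thesis unfolding eq1 by (simp add: case_prod_beta')
  qed
qed

end


locale mye =
  fixes f :: "real \<Rightarrow> real" and S :: "real set" and r :: real
  assumes dens: "density_with_support f S" and reg: "regular f S"
    and rS: "r \<in> S" and vr: "virt f r = 0"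
begin

lemma f_meas[measurable]: "f \<in> borel_measurable borel"
  using dens by (simp add: density_with_support_def)

lemma f_meas_lborel[measurable]: "f \<in> borel_measurable lborel"
  using f_meas by simp

lemma f_nn: "0 \<le> f x"
  using dens by (simp add: density_with_support_def)

lemma f_int1: "(f has_integral 1) UNIV"
  using dens by (simp add: density_with_support_def)

lemma S_int: "is_interval S"
  using dens by (simp add: density_with_support_def)

lemma f_pos: "x \<in> S \<Longrightarrow> 0 < f x"
  using dens by (simp add: density_with_support_def)

lemma f_out: "x \<notin> S \<Longrightarrow> f x = 0"
  using dens by (simp add: density_with_support_def)

lemma S_conn: "x \<in> S \<Longrightarrow> y \<in> S \<Longrightarrow> x \<le> z \<Longrightarrow> z \<le> y \<Longrightarrow> z \<in> S"
  using S_int unfolding is_interval_1 by blast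

lemma cdf_mono_S: "strict_mono_on S (cdf f)"
  using reg by (simp add: regular_def)

lemma virt_mono_S: "strict_mono_on S (virt f)"
  using reg by (simp add: regular_def)

lemma nn_f: "(\<integral>\<^sup>+x. ennreal (f x) \<partial>lborel) = 1"
  using nn_integral_has_integral_lebesgue[of UNIV f 1] f_int1 f_nn by simp

lemma int_f[simp]: "integrable lborel f"
  using nn_f f_nn by (intro integrableI_nonneg) auto

abbreviation "M1 \<equiv> valM f"

lemma sets_M1[simp, measurable_cong]: "sets M1 = sets borel"
  by (simp add: valM_def)

lemma space_M1[simp]: "space M1 = UNIV"
  by (simp add: valM_def)

lemma emeasure_M1: "A \<in> sets borel \<Longrightarrow> emeasure M1 A = (\<integral>\<^sup>+x. ennreal (f x) * indicator A x \<partial>lborel)"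
  unfolding valM_def by (subst emeasure_density) auto

lemma prob_M1: "prob_space M1"
  by (rule prob_spaceI) (simp add: emeasure_M1 nn_f)

sublocale M1: prob_space M1 by (rule prob_M1)

lemma measure_M1: "A \<in> sets borel \<Longrightarrow> measure M1 A = (\<integral>x. indicator A x * f x \<partial>lborel)"
proof -
  assume A: "A \<in> sets borel"
  have "(\<integral>x. indicator A x * f x \<partial>lborel) = enn2real (\<integral>\<^sup>+x. ennreal (indicator A x * f x) \<partial>lborel)"
    using A by (intro integral_eq_nn_integral) (auto simp: f_nn)
  also have "(\<integral>\<^sup>+x. ennreal (indicator A x * f x) \<partial>lborel) = emeasure M1 A"
    using A by (simp add: emeasure_M1 mult.commute ennreal_mult'' ennreal_indicator)
  finally show ?thesis by (simp add: measure_def)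
qed

lemma integral_M1:
  fixes u :: "real \<Rightarrow> real"
  assumes [measurable]: "u \<in> borel_measurable borel"
  shows "(\<integral>x. u x \<partial>M1) = (\<integral>x. f x * u x \<partial>lborel)"
  unfolding valM_def by (subst integral_density) (auto simp: f_nn)

lemma integrable_M1:
  fixes u :: "real \<Rightarrow> real"
  assumes [measurable]: "u \<in> borel_measurable borel"
  shows "integrable M1 u \<longleftrightarrow> integrable lborel (\<lambda>x. f x * u x)"
  unfolding valM_def by (subst integrable_density) (auto simp: f_nn)

lemma nn_integral_M1:
  fixes u :: "real \<Rightarrow> ennreal"
  assumes [measurable]: "u \<in> borel_measurable borel"
  shows "(\<integral>\<^sup>+x. u x \<partial>M1) = (\<integral>\<^sup>+x. ennreal (f x) * u x \<partial>lborel)"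
  unfolding valM_def by (subst nn_integral_density) auto

lemma emeasure_M1_sing: "emeasure M1 {x} = 0"
proof -
  have "AE y in lborel. ennreal (f y) * indicator {x} y = 0"
    using AE_lborel_singleton[of x] by eventually_elim auto
  then show ?thesis by (simp add: emeasure_M1 nn_integral_cong_AE)
qed

lemma measure_M1_sing: "measure M1 {x} = 0"
  by (simp add: measure_def emeasure_M1_sing)

lemma cdf_eq: "cdf f x = measure M1 {..x}"
proof -
  have si: "set_integrable lborel {..x} f"
    unfolding set_integrable_def
    by (rule Bochner_Integration.integrable_bound[OF int_f]) (auto simp: indicator_def f_nn)
  have "cdf f x = (LINT t:{..x}|lborel. f t)"
    unfolding cdf_def using set_borel_integral_eq_integral(2)[OF si] by simp
  also have "\<dots> = measure M1 {..x}"
    by (simp add: measure_M1 set_lebesgue_integral_def)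
  finally show ?thesis .
qed

definition h :: "real \<Rightarrow> real" where "h x = 1 - cdf f x"

lemma h_eq: "h x = measure M1 {x<..}"
proof -
  have e: "{x<..} = space M1 - {..x}" by auto
  have "measure M1 {x<..} = 1 - measure M1 {..x}"
    unfolding e by (rule M1.prob_compl) simp
  then show ?thesis by (simp add: h_def cdf_eq)
qed

lemma S_borel[measurable]: "S \<in> sets borel"
  by (rule real_interval_borel_measurable[OF S_int])

lemma h_eq': "h x = measure M1 {x..}"
proof -
  have e: "{x..} = {x} \<union> {x<..}" by auto
  have "measure M1 ({x} \<union> {x<..}) = measure M1 {x} + measure M1 {x<..}"
    by (rule M1.finite_measure_Union) auto
  then have "measure M1 {x..} = measure M1 {x} + measure M1 {x<..}"
    unfolding e .
  then show ?thesis by (simp add: h_eq measure_M1_sing)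
qed

lemma measure_Icc: "a \<le> b \<Longrightarrow> measure M1 {a..b} = h a - h b"
proof -
  assume ab: "a \<le> b"
  have "{a..b} = {a..} - {b<..}" by auto
  moreover have "{b<..} \<subseteq> {a..}" using ab by auto
  ultimately have "measure M1 {a..b} = measure M1 {a..} - measure M1 {b<..}"
    by (simp add: M1.finite_measure_Diff)
  then show ?thesis by (simp add: h_eq'[of a] h_eq[of b])
qed

lemma h_nn: "0 \<le> h x" by (simp add: h_eq)
lemma h_le1: "h x \<le> 1" by (simp add: h_eq)
lemma h_anti: "x \<le> y \<Longrightarrow> h y \<le> h x"
  unfolding h_eq by (rule M1.finite_measure_mono) auto

lemma cdf_mono: "mono (cdf f)"
  unfolding mono_def cdf_eq by (auto intro!: M1.finite_measure_mono)

lemma cdf_meas[measurable]: "cdf f \<in> borel_measurable borel"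
  by (rule borel_measurable_mono[OF cdf_mono])

lemma h_meas[measurable]: "h \<in> borel_measurable borel"
  unfolding h_def[abs_def] by measurable

lemma virt_meas[measurable]: "virt f \<in> borel_measurable borel"
  unfolding virt_def[abs_def] by measurable

lemma AE_M1_S: "AE x in M1. x \<in> S"
  unfolding valM_def by (subst AE_density) (auto intro!: AE_I2, metis f_out less_irrefl)

lemma virt_f: "x \<in> S \<Longrightarrow> virt f x * f x = x * f x - h x"
  using f_pos[of x] by (simp add: virt_def h_def field_simps)

lemma virt_neg: "x \<in> S \<Longrightarrow> x < r \<Longrightarrow> virt f x < 0"
  using virt_mono_S rS vr unfolding strict_mono_on_def by fastforce

lemma virt_nonneg: "x \<in> S \<Longrightarrow> r \<le> x \<Longrightarrow> 0 \<le> virt f x"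
  using virt_mono_S rS vr unfolding strict_mono_on_def
  by (cases "x = r") fastforce+

definition g :: "real \<Rightarrow> real" where
  "g x = (if x \<in> S \<and> r \<le> x then virt f x else 0)"

lemma g_meas[measurable]: "g \<in> borel_measurable borel"
  unfolding g_def[abs_def] by measurable

lemma g_nn: "0 \<le> g x"
  by (simp add: g_def virt_nonneg)

lemma g_mono: "x \<in> S \<Longrightarrow> y \<in> S \<Longrightarrow> x \<le> y \<Longrightarrow> g x \<le> g y"
proof -
  assume xy: "x \<in> S" "y \<in> S" "x \<le> y"
  have "virt f x \<le> virt f y"
  proof (cases "x = y")
    case False
    then have "x < y" using xy by simp
    then show ?thesis using virt_mono_S xy unfolding strict_mono_on_def by (simp add: less_imp_le)
  qed simp
  then show ?thesis using xy by (auto simp: g_def virt_nonneg)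
qed

lemma g_below: "x < r \<Longrightarrow> g x = 0"
  by (simp add: g_def)

lemma virt_le_g: "x \<in> S \<Longrightarrow> virt f x \<le> g x"
  using virt_neg[of x] by (auto simp: g_def)

lemma uniq: "r' \<in> S \<Longrightarrow> virt f r' = 0 \<Longrightarrow> r' = r"
  using virt_mono_S rS vr unfolding strict_mono_on_def
  by (metis less_irrefl linorder_neqE_linordered_idom)

end


definition II :: "real \<Rightarrow> real \<Rightarrow> (real \<Rightarrow> real) \<Rightarrow> real" where
  "II a b u = (\<integral>s. indicator {a..b} s * u s \<partial>lborel)"

lemma int_bdd:
  fixes u :: "real \<Rightarrow> real"
  assumes [measurable]: "u \<in> borel_measurable borel" and B: "\<And>x. x \<in> {a..b} \<Longrightarrow> \<bar>u x\<bar> \<le> B"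
  shows "integrable lborel (\<lambda>x. indicator {a..b} x * u x)"
proof (rule Bochner_Integration.integrable_bound)
  show "integrable lborel (\<lambda>x. indicator {a..b} x *\<^sub>R B)"
    by (rule integrable_indicator) (auto simp: emeasure_lborel_Icc_eq)
  show "AE x in lborel. norm (indicator {a..b} x * u x) \<le> norm (indicator {a..b} x *\<^sub>R B)"
    using B by (intro AE_I2) (auto simp: indicator_def intro!: order_trans[OF B abs_ge_self])
qed simp

lemma II_split:
  fixes u :: "real \<Rightarrow> real"
  assumes [measurable]: "u \<in> borel_measurable borel" and B: "\<And>x. x \<in> {a..c} \<Longrightarrow> \<bar>u x\<bar> \<le> B"
    and abc: "a \<le> b" "b \<le> c"
  shows "II a c u = II a b u + II b c u"
proof -
  have i1: "integrable lborel (\<lambda>x. indicator {a..b} x * u x)"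
    using abc by (intro int_bdd[of _ _ _ B]) (auto intro: B)
  have i2: "integrable lborel (\<lambda>x. indicator {b..c} x * u x)"
    using abc by (intro int_bdd[of _ _ _ B]) (auto intro: B)
  have "integrable lborel (\<lambda>x. indicator {b..b} x * u x)"
    using abc by (intro int_bdd[of _ b b B]) (auto intro: B)
  then have i3: "integrable lborel (\<lambda>x. indicator {b} x * u x)" by simp
  have z: "(\<integral>x. indicator {b} x * u x \<partial>lborel) = 0"
  proof -
    have "AE x in lborel. indicator {b} x * u x = 0"
      using AE_lborel_singleton[of b] by eventually_elim auto
    then show ?thesis by (simp add: integral_eq_zero_AE)
  qed
  have "\<And>x. indicator {a..c} x * u x = indicator {a..b} x * u x + indicator {b..c} x * u x - indicator {b} x * u x"
    using abc by (auto simp: indicator_def)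
  then have "II a c u = (\<integral>x. indicator {a..b} x * u x + indicator {b..c} x * u x - indicator {b} x * u x \<partial>lborel)"
    unfolding II_def by simp
  also have "\<dots> = II a b u + II b c u"
    using i1 i2 i3 z unfolding II_def by simp
  finally show ?thesis .
qed

lemma II_const: "a \<le> b \<Longrightarrow> II a b (\<lambda>_. c) = (b - a) * c"
  unfolding II_def by simp

lemma II_mono:
  fixes u v :: "real \<Rightarrow> real"
  assumes [measurable]: "u \<in> borel_measurable borel" "v \<in> borel_measurable borel"
    and Bu: "\<And>x. x \<in> {a..b} \<Longrightarrow> \<bar>u x\<bar> \<le> B" and Bv: "\<And>x. x \<in> {a..b} \<Longrightarrow> \<bar>v x\<bar> \<le> B"
    and le: "\<And>x. x \<in> {a..b} \<Longrightarrow> u x \<le> v x"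
  shows "II a b u \<le> II a b v"
  unfolding II_def
  by (rule integral_mono[OF int_bdd[OF _ Bu] int_bdd[OF _ Bv]]) (auto simp: indicator_def le)

lemma II_meas[measurable]:
  fixes u :: "real \<Rightarrow> real"
  assumes [measurable]: "u \<in> borel_measurable borel"
  shows "(\<lambda>x. II a x u) \<in> borel_measurable borel"
proof -
  have "(\<lambda>(x, s). indicator {a..x} s * u s) \<in> borel_measurable (borel \<Otimes>\<^sub>M lborel)"
  proof -
    have "(\<lambda>(x, s). indicator {a..x} s * u s) = (\<lambda>p. (if a \<le> snd p \<and> snd p \<le> fst p then 1 else 0) * u (snd p))"
      by (auto simp: indicator_def fun_eq_iff)
    also have "\<dots> \<in> borel_measurable (borel \<Otimes>\<^sub>M lborel)" by measurable
    finally show ?thesis .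
  qed
  then have "(\<lambda>x. \<integral>s. indicator {a..x} s * u s \<partial>lborel) \<in> borel_measurable borel"
    by (rule lborel.borel_measurable_lebesgue_integral[where f="\<lambda>x s. indicator {a..x} s * u s", simplified])
  then show ?thesis unfolding II_def .
qed

lemma small_zero:
  fixes c K :: real
  assumes "\<And>N::nat. N > 0 \<Longrightarrow> \<bar>c\<bar> \<le> K / real N"
  shows "c = 0"
proof (rule ccontr)
  assume c: "c \<noteq> 0"
  then have cp: "\<bar>c\<bar> > 0" by simp
  obtain N :: nat where N: "N > K / \<bar>c\<bar>" using reals_Archimedean2 by blast
  have K0: "0 \<le> K" using assms[of 1] cp by simp
  have Np: "N > 0" using N K0 cp
    by (metis divide_nonneg_pos gr0I leD of_nat_0)
  have "\<bar>c\<bar> \<le> K / real N" using assms Np by blast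
  then have "\<bar>c\<bar> * N \<le> K" using Np by (simp add: field_simps)
  moreover have "K < \<bar>c\<bar> * N" using N cp by (simp add: field_simps)
  ultimately show False by simp
qed

context mye
begin

lemma envelope:
  fixes Q U :: "real \<Rightarrow> real"
  assumes Qm[measurable]: "Q \<in> borel_measurable borel" and Q0: "\<And>x. 0 \<le> Q x" and QB: "\<And>x. Q x \<le> B"
    and Qmono: "\<And>x y. x \<in> S \<Longrightarrow> y \<in> S \<Longrightarrow> x \<le> y \<Longrightarrow> Q x \<le> Q y"
    and IC: "\<And>x y. x \<in> S \<Longrightarrow> y \<in> S \<Longrightarrow> U y + (x - y) * Q y \<le> U x"
    and m: "m \<in> S" and X: "X \<in> S" and mX: "m \<le> X"
  shows "U X = U m + II m X Q"
proof -
  have bnd: "\<And>x. \<bar>Q x\<bar> \<le> B" using Q0 QB by (simp add: abs_le_iff)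
  have Sin: "\<And>x. m \<le> x \<Longrightarrow> x \<le> X \<Longrightarrow> x \<in> S" using S_conn[OF m X] by blast
  have IIb: "(x - y) * Q y \<le> II y x Q \<and> II y x Q \<le> (x - y) * Q x"
    if "m \<le> y" "y \<le> x" "x \<le> X" for x y
  proof
    have "II y x (\<lambda>_. Q y) \<le> II y x Q"
      by (rule II_mono[where B=B]) (use that bnd in \<open>auto intro!: Qmono Sin\<close>)
    then show "(x - y) * Q y \<le> II y x Q" using that by (simp add: II_const)
    have "II y x Q \<le> II y x (\<lambda>_. Q x)"
      by (rule II_mono[where B=B]) (use that bnd in \<open>auto intro!: Qmono Sin\<close>)
    then show "II y x Q \<le> (x - y) * Q x" using that by (simp add: II_const)
  qed
  define D where "D x = U x - II m x Q" for x
  have Dstep: "\<bar>D x - D y\<bar> \<le> (x - y) * (Q x - Q y)"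
    if "m \<le> y" "y \<le> x" "x \<le> X" for x y
  proof -
    have sp: "II m x Q = II m y Q + II y x Q"
      by (rule II_split[where B=B]) (use that bnd in auto)
    have u1: "U y + (x - y) * Q y \<le> U x" using IC[of x y] Sin that by simp
    have u2: "U x + (y - x) * Q x \<le> U y" using IC[of y x] Sin that by simp
    have e: "D x - D y = (U x - U y) - II y x Q" unfolding D_def sp by simp
    have e1: "(x - y) * Q y = x * Q y - y * Q y" "(x - y) * Q x = x * Q x - y * Q x"
      "(y - x) * Q x = y * Q x - x * Q x" "(x - y) * (Q x - Q y) = x * Q x - x * Q y - y * Q x + y * Q y"
      by (simp_all add: algebra_simps)
    show ?thesis unfolding abs_le_iff e using IIb[OF that] u1 u2 unfolding e1 by linarith
  qed
  have Dm: "D m = U m"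
  proof -
    have "II m m Q = 0" using IIb[of m m] mX by simp
    then show ?thesis by (simp add: D_def)
  qed
  have main: "\<bar>D X - D m\<bar> \<le> (X - m) * B / real N" if N: "N > 0" for N :: nat
  proof -
    define d where "d = (X - m) / real N"
    have d0: "0 \<le> d" using mX N by (simp add: d_def)
    have tk: "m \<le> m + real k * d \<and> m + real k * d \<le> X" if "k \<le> N" for k
    proof
      show "m \<le> m + real k * d" using d0 by simp
      have "real k * d \<le> real N * d" using that d0 by (simp add: mult_right_mono)
      also have "real N * d = X - m" using N by (simp add: d_def)
      finally show "m + real k * d \<le> X" by simp
    qed
    have ind: "\<bar>D (m + real k * d) - D m\<bar> \<le> d * (Q (m + real k * d) - Q m)" if "k \<le> N" for k
      using that
    proof (induction k)
      case 0 then show ?case by simp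
    next
      case (Suc k)
      have a: "\<bar>D (m + real k * d) - D m\<bar> \<le> d * (Q (m + real k * d) - Q m)" using Suc by simp
      have t1: "m \<le> m + real k * d" "m + real k * d \<le> X" using tk[of k] Suc by auto
      have t2: "m + real (Suc k) * d \<le> X" using tk[of "Suc k"] Suc by auto
      have st: "m + real (Suc k) * d = (m + real k * d) + d" by (simp add: algebra_simps)
      have b: "\<bar>D (m + real (Suc k) * d) - D (m + real k * d)\<bar> \<le> d * (Q (m + real (Suc k) * d) - Q (m + real k * d))"
        using Dstep[of "m + real k * d" "m + real (Suc k) * d"] t1 t2 d0 st by simp
      show ?case using a b by (simp add: abs_le_iff algebra_simps)
    qed
    have "\<bar>D X - D m\<bar> \<le> d * (Q X - Q m)"
      using ind[of N] N by (simp add: d_def)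
    also have "\<dots> \<le> d * B" using d0 Q0[of m] QB[of X] by (intro mult_left_mono) auto
    also have "\<dots> = (X - m) * B / real N" by (simp add: d_def)
    finally show ?thesis .
  qed
  have "D X - D m = 0"
    by (rule small_zero[of _ "(X - m) * B"]) (use main in auto)
  then show ?thesis using Dm by (simp add: D_def)
qed

lemma II_nn_eq:
  fixes Q :: "real \<Rightarrow> real"
  assumes Qm[measurable]: "Q \<in> borel_measurable borel" and Q0: "\<And>x. 0 \<le> Q x" and QB: "\<And>x. Q x \<le> B"
  shows "ennreal (II a b Q) = (\<integral>\<^sup>+s. ennreal (indicator {a..b} s * Q s) \<partial>lborel)"
proof -
  have "integrable lborel (\<lambda>s. indicator {a..b} s * Q s)"
    by (rule int_bdd[where B=B]) (use Q0 QB in \<open>auto simp: abs_le_iff intro: order_trans\<close>)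
  then show ?thesis unfolding II_def
    by (subst nn_integral_eq_integral) (auto simp: Q0)
qed

lemma II_nn: "(\<And>x. 0 \<le> Q x) \<Longrightarrow> 0 \<le> II a b Q"
  unfolding II_def by (rule integral_nonneg_AE) auto

lemma tri:
  fixes Q :: "real \<Rightarrow> real"
  assumes Qm[measurable]: "Q \<in> borel_measurable borel" and Q0: "\<And>x. 0 \<le> Q x" and QB: "\<And>x. Q x \<le> B"
    and mM: "m \<le> M"
  shows "(\<integral>x. indicator {m..M} x * (f x * II m x Q) \<partial>lborel) = (\<integral>s. indicator {m..M} s * (Q s * (h s - h M)) \<partial>lborel)"
proof -
  have hh: "s \<le> M \<Longrightarrow> 0 \<le> h s - h M" for s using h_anti[of s M] by simp
  have L: "(\<integral>x. indicator {m..M} x * (f x * II m x Q) \<partial>lborel)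
      = enn2real (\<integral>\<^sup>+x. ennreal (indicator {m..M} x * (f x * II m x Q)) \<partial>lborel)"
    by (rule integral_eq_nn_integral) (auto simp: f_nn II_nn Q0)
  have R: "(\<integral>s. indicator {m..M} s * (Q s * (h s - h M)) \<partial>lborel)
      = enn2real (\<integral>\<^sup>+s. ennreal (indicator {m..M} s * (Q s * (h s - h M))) \<partial>lborel)"
    by (rule integral_eq_nn_integral) (auto simp: Q0 hh indicator_def h_anti intro!: AE_I2 mult_nonneg_nonneg)
  have "(\<integral>\<^sup>+x. ennreal (indicator {m..M} x * (f x * II m x Q)) \<partial>lborel)
      = (\<integral>\<^sup>+x. (\<integral>\<^sup>+s. ennreal (indicator {m..M} x * f x * (indicator {m..x} s * Q s)) \<partial>lborel) \<partial>lborel)"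
  proof (rule nn_integral_cong)
    fix x
    have "ennreal (indicator {m..M} x * (f x * II m x Q)) = ennreal (indicator {m..M} x * f x) * ennreal (II m x Q)"
      by (simp add: f_nn II_nn Q0 ennreal_mult'' mult.assoc)
    also have "\<dots> = ennreal (indicator {m..M} x * f x) * (\<integral>\<^sup>+s. ennreal (indicator {m..x} s * Q s) \<partial>lborel)"
      by (simp add: II_nn_eq[OF Qm Q0 QB])
    also have "\<dots> = (\<integral>\<^sup>+s. ennreal (indicator {m..M} x * f x) * ennreal (indicator {m..x} s * Q s) \<partial>lborel)"
      by (rule nn_integral_cmult[symmetric]) simp
    also have "\<dots> = (\<integral>\<^sup>+s. ennreal (indicator {m..M} x * f x * (indicator {m..x} s * Q s)) \<partial>lborel)"
      by (rule nn_integral_cong) (simp add: f_nn Q0 ennreal_mult'')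
    finally show "ennreal (indicator {m..M} x * (f x * II m x Q)) = (\<integral>\<^sup>+s. ennreal (indicator {m..M} x * f x * (indicator {m..x} s * Q s)) \<partial>lborel)" .
  qed
  also have "\<dots> = (\<integral>\<^sup>+s. (\<integral>\<^sup>+x. ennreal (indicator {m..M} x * f x * (indicator {m..x} s * Q s)) \<partial>lborel) \<partial>lborel)"
  proof (rule lborel_pair.Fubini'[symmetric])
    have "(\<lambda>(x, s). ennreal (indicator {m..M} x * f x * (indicator {m..x} s * Q s)))
        = (\<lambda>p. ennreal ((if m \<le> fst p \<and> fst p \<le> M then 1 else 0) * f (fst p) * ((if m \<le> snd p \<and> snd p \<le> fst p then 1 else 0) * Q (snd p))))"
      by (auto simp: indicator_def fun_eq_iff)
    also have "\<dots> \<in> borel_measurable (lborel \<Otimes>\<^sub>M lborel)" by measurable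
    finally show "(\<lambda>(x, s). ennreal (indicator {m..M} x * f x * (indicator {m..x} s * Q s))) \<in> borel_measurable (lborel \<Otimes>\<^sub>M lborel)" .
  qed
  also have "\<dots> = (\<integral>\<^sup>+s. ennreal (indicator {m..M} s * (Q s * (h s - h M))) \<partial>lborel)"
  proof (rule nn_integral_cong)
    fix s
    have "(\<integral>\<^sup>+x. ennreal (indicator {m..M} x * f x * (indicator {m..x} s * Q s)) \<partial>lborel)
        = (\<integral>\<^sup>+x. ennreal (indicator {m..M} s * Q s) * (ennreal (f x) * indicator {s..M} x) \<partial>lborel)"
      by (rule nn_integral_cong) (auto simp: indicator_def f_nn Q0 ennreal_mult'' mult.commute)
    also have "\<dots> = ennreal (indicator {m..M} s * Q s) * (\<integral>\<^sup>+x. ennreal (f x) * indicator {s..M} x \<partial>lborel)"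
      by (rule nn_integral_cmult) simp
    also have "(\<integral>\<^sup>+x. ennreal (f x) * indicator {s..M} x \<partial>lborel) = emeasure M1 {s..M}"
      by (simp add: emeasure_M1)
    finally have e: "(\<integral>\<^sup>+x. ennreal (indicator {m..M} x * f x * (indicator {m..x} s * Q s)) \<partial>lborel)
        = ennreal (indicator {m..M} s * Q s) * emeasure M1 {s..M}" .
    show "(\<integral>\<^sup>+x. ennreal (indicator {m..M} x * f x * (indicator {m..x} s * Q s)) \<partial>lborel)
        = ennreal (indicator {m..M} s * (Q s * (h s - h M)))"
    proof (cases "s \<in> {m..M}")
      case True
      then have "emeasure M1 {s..M} = ennreal (h s - h M)"
        using measure_Icc[of s M] by (simp add: M1.emeasure_eq_measure)
      then show ?thesis using True e hh[of s] Q0[of s] by (simp add: ennreal_mult'')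
    next
      case False
      then show ?thesis using e by simp
    qed
  qed
  finally show ?thesis using L R by simp
qed

lemma int_f_bdd:
  fixes u :: "real \<Rightarrow> real"
  assumes [measurable]: "u \<in> borel_measurable borel" and B: "\<And>x. x \<in> {a..b} \<Longrightarrow> \<bar>u x\<bar> \<le> C"
  shows "integrable lborel (\<lambda>x. indicator {a..b} x * (f x * u x))"
proof (rule Bochner_Integration.integrable_bound)
  show "integrable lborel (\<lambda>x. C * f x)" by simp
  show "AE x in lborel. norm (indicator {a..b} x * (f x * u x)) \<le> norm (C * f x)"
  proof (intro AE_I2)
    fix x
    show "norm (indicator {a..b} x * (f x * u x)) \<le> norm (C * f x)"
    proof (cases "x \<in> {a..b}")
      case True
      then have "\<bar>u x\<bar> \<le> C" by (rule B)
      then have "f x * \<bar>u x\<bar> \<le> f x * \<bar>C\<bar>" using f_nn[of x] by (intro mult_left_mono) auto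
      then show ?thesis using True f_nn[of x] by (simp add: abs_mult mult.commute)
    qed simp
  qed
qed simp

lemma II_le:
  fixes Q :: "real \<Rightarrow> real"
  assumes Qm[measurable]: "Q \<in> borel_measurable borel" and Q0: "\<And>x. 0 \<le> Q x" and QB: "\<And>x. Q x \<le> B"
    and "a \<le> b"
  shows "II a b Q \<le> (b - a) * B"
proof -
  have "II a b Q \<le> II a b (\<lambda>_. B)"
    by (rule II_mono[where B=B]) (use Q0 QB in \<open>auto simp: abs_le_iff intro: order_trans\<close>)
  then show ?thesis using assms by (simp add: II_const)
qed

lemma ident:
  fixes Q U :: "real \<Rightarrow> real"
  assumes Qm[measurable]: "Q \<in> borel_measurable borel" and Q0: "\<And>x. 0 \<le> Q x" and QB: "\<And>x. Q x \<le> B"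
    and Qmono: "\<And>x y. x \<in> S \<Longrightarrow> y \<in> S \<Longrightarrow> x \<le> y \<Longrightarrow> Q x \<le> Q y"
    and IC: "\<And>x y. x \<in> S \<Longrightarrow> y \<in> S \<Longrightarrow> U y + (x - y) * Q y \<le> U x"
    and m: "m \<in> S" and M: "M \<in> S" and mr: "m \<le> r" and rM: "r \<le> M"
  shows "(\<integral>x. indicator {m..M} x * (f x * (x * Q x - U x)) \<partial>lborel)
      = (\<integral>x. indicator {m..M} x * (Q x * (x * f x - h x)) \<partial>lborel) + h M * II r M Q + h M * U r - U m * h m"
proof -
  have mM: "m \<le> M" using mr rM by simp
  have B0: "0 \<le> B" using Q0[of 0] QB[of 0] by simp
  have QBa: "\<bar>Q x\<bar> \<le> B" for x using Q0[of x] QB[of x] by simp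
  have env: "U x = U m + II m x Q" if "x \<in> {m..M}" for x
    by (rule envelope[OF Qm Q0 QB Qmono IC m]) (use that S_conn[OF m M] in auto)
  define C where "C = (\<bar>m\<bar> + \<bar>M\<bar>) * B"
  have xb: "\<bar>x\<bar> \<le> \<bar>m\<bar> + \<bar>M\<bar>" if "x \<in> {m..M}" for x using that by auto
  have i1: "integrable lborel (\<lambda>x. indicator {m..M} x * (f x * (x * Q x)))"
  proof (rule int_f_bdd[where C=C])
    fix x assume x: "x \<in> {m..M}"
    have "\<bar>x * Q x\<bar> = \<bar>x\<bar> * \<bar>Q x\<bar>" by (simp add: abs_mult)
    also have "\<dots> \<le> (\<bar>m\<bar> + \<bar>M\<bar>) * B" by (rule mult_mono[OF xb[OF x] QBa]) auto
    finally show "\<bar>x * Q x\<bar> \<le> C" by (simp add: C_def)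
  qed simp
  have i2: "integrable lborel (\<lambda>x. indicator {m..M} x * (f x * 1))"
    by (rule int_f_bdd[where C=1]) auto
  have IIb: "\<bar>II m x Q\<bar> \<le> (M - m) * B" if "x \<in> {m..M}" for x
  proof -
    have "0 \<le> II m x Q" by (rule II_nn[OF Q0])
    moreover have "II m x Q \<le> (x - m) * B" using that by (intro II_le[OF Qm Q0 QB]) auto
    moreover have "(x - m) * B \<le> (M - m) * B" using that B0 by (intro mult_right_mono) auto
    ultimately show ?thesis by simp
  qed
  have i3: "integrable lborel (\<lambda>x. indicator {m..M} x * (f x * II m x Q))"
    by (rule int_f_bdd[where C="(M - m) * B"]) (use IIb in auto)
  have i4: "integrable lborel (\<lambda>x. indicator {m..M} x * (Q x * h x))"
    by (rule int_bdd[where B=B]) (use QBa h_nn h_le1 in \<open>auto simp: abs_mult intro: mult_le_one order_trans[OF mult_right_le_one_le]\<close>)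
  have i5: "integrable lborel (\<lambda>x. indicator {m..M} x * Q x)"
    by (rule int_bdd[where B=B]) (use QBa in auto)
  have E1: "(\<integral>x. indicator {m..M} x * (f x * (x * Q x - U x)) \<partial>lborel)
      = (\<integral>x. indicator {m..M} x * (f x * (x * Q x)) - U m * (indicator {m..M} x * (f x * 1)) - indicator {m..M} x * (f x * II m x Q) \<partial>lborel)"
  proof (rule Bochner_Integration.integral_cong[OF refl])
    fix x
    show "indicator {m..M} x * (f x * (x * Q x - U x)) = indicator {m..M} x * (f x * (x * Q x)) - U m * (indicator {m..M} x * (f x * 1)) - indicator {m..M} x * (f x * II m x Q)"
    proof (cases "x \<in> {m..M}")
      case True
      show ?thesis unfolding env[OF True] using True by (simp add: algebra_simps)
    qed simp
  qed
  also have "\<dots> = (\<integral>x. indicator {m..M} x * (f x * (x * Q x)) \<partial>lborel) - U m * (\<integral>x. indicator {m..M} x * (f x * 1) \<partial>lborel)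
       - (\<integral>x. indicator {m..M} x * (f x * II m x Q) \<partial>lborel)"
    using i1 i2 i3 by simp
  finally have E1': "(\<integral>x. indicator {m..M} x * (f x * (x * Q x - U x)) \<partial>lborel)
     = (\<integral>x. indicator {m..M} x * (f x * (x * Q x)) \<partial>lborel) - U m * (\<integral>x. indicator {m..M} x * (f x * 1) \<partial>lborel)
       - (\<integral>x. indicator {m..M} x * (f x * II m x Q) \<partial>lborel)" .
  have E3: "(\<integral>x. indicator {m..M} x * (f x * 1) \<partial>lborel) = h m - h M"
    using measure_M1[of "{m..M}"] measure_Icc[OF mM] by simp
  have E4: "(\<integral>x. indicator {m..M} x * (f x * II m x Q) \<partial>lborel)
      = (\<integral>s. indicator {m..M} s * (Q s * h s) \<partial>lborel) - h M * II m M Q"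
  proof -
    have "(\<integral>x. indicator {m..M} x * (f x * II m x Q) \<partial>lborel) = (\<integral>s. indicator {m..M} s * (Q s * (h s - h M)) \<partial>lborel)"
      by (rule tri[OF Qm Q0 QB mM])
    also have "\<dots> = (\<integral>s. indicator {m..M} s * (Q s * h s) - h M * (indicator {m..M} s * Q s) \<partial>lborel)"
      by (rule Bochner_Integration.integral_cong[OF refl]) (simp add: algebra_simps)
    also have "\<dots> = (\<integral>s. indicator {m..M} s * (Q s * h s) \<partial>lborel) - h M * II m M Q"
      using i4 i5 unfolding II_def by simp
    finally show ?thesis .
  qed
  have E5: "(\<integral>x. indicator {m..M} x * (Q x * (x * f x - h x)) \<partial>lborel)
      = (\<integral>x. indicator {m..M} x * (f x * (x * Q x)) \<partial>lborel) - (\<integral>s. indicator {m..M} s * (Q s * h s) \<partial>lborel)"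
  proof -
    have "(\<integral>x. indicator {m..M} x * (Q x * (x * f x - h x)) \<partial>lborel)
       = (\<integral>x. indicator {m..M} x * (f x * (x * Q x)) - indicator {m..M} x * (Q x * h x) \<partial>lborel)"
      by (rule Bochner_Integration.integral_cong[OF refl]) (simp add: algebra_simps)
    then show ?thesis using i1 i4 by simp
  qed
  have E6: "II m M Q = II m r Q + II r M Q"
    by (rule II_split[where B=B]) (use QBa mr rM in auto)
  have E7: "U r = U m + II m r Q"
    by (rule env) (use mr rM in auto)
  show ?thesis unfolding E1' E3 E4 E5 using E6 E7 by (simp add: algebra_simps)
qed

end


context mye
begin

lemma exists_upper:
  fixes k :: nat
  shows "\<exists>M\<in>S. r \<le> M \<and> (\<forall>y\<in>S. y \<le> r + real k \<longrightarrow> y - 1 / real (Suc k) < M)"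
proof -
  define A where "A = S \<inter> {r..r + real k}"
  have rA: "r \<in> A" using rS by (simp add: A_def)
  have bA: "bdd_above A" unfolding A_def by (rule bdd_aboveI[of _ "r + real k"]) auto
  have "Sup A - 1 / real (Suc k) < Sup A" by simp
  then obtain M where M: "M \<in> A" "Sup A - 1 / real (Suc k) < M"
    using less_cSup_iff[of A "Sup A - 1 / real (Suc k)"] rA bA by blast
  show ?thesis
  proof (intro bexI[of _ M] conjI ballI impI)
    show "M \<in> S" "r \<le> M" using M by (auto simp: A_def)
    fix y assume y: "y \<in> S" "y \<le> r + real k"
    show "y - 1 / real (Suc k) < M"
    proof (cases "r \<le> y")
      case True
      then have "y \<in> A" using y by (simp add: A_def)
      then have "y \<le> Sup A" using bA by (rule cSup_upper)
      then show ?thesis using M by simp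
    next
      case False
      then show ?thesis using \<open>r \<le> M\<close> by (smt (verit) of_nat_0_le_iff divide_nonneg_nonneg)
    qed
  qed
qed

lemma exists_lower:
  fixes k :: nat
  shows "\<exists>m\<in>S. m \<le> r \<and> (\<forall>y\<in>S. r - real k \<le> y \<longrightarrow> m < y + 1 / real (Suc k))"
proof -
  define A where "A = S \<inter> {r - real k..r}"
  have rA: "r \<in> A" using rS by (simp add: A_def)
  have bA: "bdd_below A" unfolding A_def by (rule bdd_belowI[of _ "r - real k"]) auto
  have "Inf A < Inf A + 1 / real (Suc k)" by simp
  then obtain m where m: "m \<in> A" "m < Inf A + 1 / real (Suc k)"
    using cInf_less_iff[of A "Inf A + 1 / real (Suc k)"] rA bA by blast
  show ?thesis
  proof (intro bexI[of _ m] conjI ballI impI)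
    show "m \<in> S" "m \<le> r" using m by (auto simp: A_def)
    fix y assume y: "y \<in> S" "r - real k \<le> y"
    show "m < y + 1 / real (Suc k)"
    proof (cases "y \<le> r")
      case True
      then have "y \<in> A" using y by (simp add: A_def)
      then have "Inf A \<le> y" using bA by (rule cInf_lower)
      then show ?thesis using m by simp
    next
      case False
      then show ?thesis using \<open>m \<le> r\<close> by (smt (verit) of_nat_0_le_iff divide_nonneg_nonneg)
    qed
  qed
qed

definition MM :: "nat \<Rightarrow> real" where
  "MM k = (SOME M. M \<in> S \<and> r \<le> M \<and> (\<forall>y\<in>S. y \<le> r + real k \<longrightarrow> y - 1 / real (Suc k) < M))"

definition mm :: "nat \<Rightarrow> real" where
  "mm k = (SOME m. m \<in> S \<and> m \<le> r \<and> (\<forall>y\<in>S. r - real k \<le> y \<longrightarrow> m < y + 1 / real (Suc k)))"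

lemma MM_prop: "MM k \<in> S \<and> r \<le> MM k \<and> (\<forall>y\<in>S. y \<le> r + real k \<longrightarrow> y - 1 / real (Suc k) < MM k)"
  unfolding MM_def by (rule someI_ex) (use exists_upper[of k] in blast)

lemma mm_prop: "mm k \<in> S \<and> mm k \<le> r \<and> (\<forall>y\<in>S. r - real k \<le> y \<longrightarrow> mm k < y + 1 / real (Suc k))"
  unfolding mm_def by (rule someI_ex) (use exists_lower[of k] in blast)

lemma MM_S: "MM k \<in> S" and r_MM: "r \<le> MM k" and mm_S: "mm k \<in> S" and mm_r: "mm k \<le> r"
  using MM_prop mm_prop by auto

lemma eventually_inv_small:
  fixes e :: real
  assumes "0 < e"
  shows "\<forall>\<^sub>F k in sequentially. 1 / real (Suc k) < e"
proof -
  obtain N :: nat where N: "1 / e < real N" using reals_Archimedean2 by blast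
  show ?thesis
  proof (rule eventually_sequentiallyI[of N])
    fix k assume k: "N \<le> k"
    have "1 / e < real (Suc k)" using N k by linarith
    then show "1 / real (Suc k) < e" using assms by (simp add: field_simps)
  qed
qed

lemma MM_ev:
  assumes x: "x \<in> S" and y: "y \<in> S" "x < y"
  shows "\<forall>\<^sub>F k in sequentially. x \<le> MM k"
proof -
  have e1: "\<forall>\<^sub>F k in sequentially. y \<le> r + real k"
  proof -
    obtain N :: nat where "y - r < real N" using reals_Archimedean2 by blast
    then show ?thesis by (intro eventually_sequentiallyI[of N]) (auto)
  qed
  have e2: "\<forall>\<^sub>F k in sequentially. 1 / real (Suc k) < y - x"
    by (rule eventually_inv_small) (use y in simp)
  show ?thesis using e1 e2
  proof eventually_elim
    case (elim k)
    then have "y - 1 / real (Suc k) < MM k" using MM_prop[of k] y by blast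
    then show ?case using elim by simp
  qed
qed

lemma mm_ev:
  assumes x: "x \<in> S" and y: "y \<in> S" "y < x"
  shows "\<forall>\<^sub>F k in sequentially. mm k \<le> x"
proof -
  have e1: "\<forall>\<^sub>F k in sequentially. r - real k \<le> y"
  proof -
    obtain N :: nat where "r - y < real N" using reals_Archimedean2 by blast
    then show ?thesis by (intro eventually_sequentiallyI[of N]) (auto)
  qed
  have e2: "\<forall>\<^sub>F k in sequentially. 1 / real (Suc k) < x - y"
    by (rule eventually_inv_small) (use y in simp)
  show ?thesis using e1 e2
  proof eventually_elim
    case (elim k)
    then have "mm k < y + 1 / real (Suc k)" using mm_prop[of k] y by blast
    then show ?case using elim by simp
  qed
qed

lemma AE_not_min: "AE x in lborel. x \<in> S \<longrightarrow> (\<exists>y\<in>S. y < x)"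
proof (cases "\<exists>x0\<in>S. \<forall>y\<in>S. x0 \<le> y")
  case True
  then obtain x0 where x0: "x0 \<in> S" "\<forall>y\<in>S. x0 \<le> y" by blast
  show ?thesis using AE_lborel_singleton[of x0]
  proof eventually_elim
    case (elim x)
    then show ?case using x0 by force
  qed
next
  case False
  then show ?thesis by (intro AE_I2) (auto simp: not_le)
qed

lemma AE_not_max: "AE x in lborel. x \<in> S \<longrightarrow> (\<exists>y\<in>S. x < y)"
proof (cases "\<exists>x0\<in>S. \<forall>y\<in>S. y \<le> x0")
  case True
  then obtain x0 where x0: "x0 \<in> S" "\<forall>y\<in>S. y \<le> x0" by blast
  show ?thesis using AE_lborel_singleton[of x0]
  proof eventually_elim
    case (elim x)
    then show ?case using x0 by force
  qed
next
  case False
  then show ?thesis by (intro AE_I2) (auto simp: not_le)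
qed

lemma AE_ev_in: "AE x in lborel. f x = 0 \<or> (\<forall>\<^sub>F k in sequentially. x \<in> {mm k..MM k})"
  using AE_not_min AE_not_max
proof eventually_elim
  case (elim x)
  show ?case
  proof (cases "x \<in> S")
    case True
    then obtain y1 y2 where "y1 \<in> S" "y1 < x" "y2 \<in> S" "x < y2" using elim by blast
    then have "\<forall>\<^sub>F k in sequentially. mm k \<le> x" "\<forall>\<^sub>F k in sequentially. x \<le> MM k"
      using mm_ev MM_ev True by blast+
    then have "\<forall>\<^sub>F k in sequentially. x \<in> {mm k..MM k}" by eventually_elim simp
    then show ?thesis by simp
  qed (simp add: f_out)
qed

lemma lim_trunc:
  fixes u :: "real \<Rightarrow> real"
  assumes [measurable]: "u \<in> borel_measurable borel" and int: "integrable lborel (\<lambda>x. f x * u x)"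
  shows "(\<lambda>k. \<integral>x. indicator {mm k..MM k} x * (f x * u x) \<partial>lborel) \<longlonglongrightarrow> (\<integral>x. f x * u x \<partial>lborel)"
proof (rule integral_dominated_convergence[where w="\<lambda>x. \<bar>f x * u x\<bar>"])
  show "AE x in lborel. (\<lambda>k. indicator {mm k..MM k} x * (f x * u x)) \<longlonglongrightarrow> f x * u x"
    using AE_ev_in
  proof eventually_elim
    case (elim x)
    then show ?case
    proof
      assume "\<forall>\<^sub>F k in sequentially. x \<in> {mm k..MM k}"
      then have "\<forall>\<^sub>F k in sequentially. indicator {mm k..MM k} x * (f x * u x) = f x * u x"
        by eventually_elim simp
      then show ?thesis by (rule tendsto_eventually)
    qed simp
  qed
  show "\<And>k. AE x in lborel. norm (indicator {mm k..MM k} x * (f x * u x)) \<le> \<bar>f x * u x\<bar>"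
    by (auto simp: indicator_def)
qed (use int in auto)

lemma h_MM_lim: "(\<lambda>k. h (MM k)) \<longlonglongrightarrow> 0"
proof -
  have e: "h (MM k) = (\<integral>x. f x * indicator {MM k<..} x \<partial>lborel)" for k
    using measure_M1[of "{MM k<..}"] by (simp add: h_eq mult.commute)
  have "(\<lambda>k. \<integral>x. f x * indicator {MM k<..} x \<partial>lborel) \<longlonglongrightarrow> (\<integral>x. f x * 0 \<partial>lborel)"
  proof (rule integral_dominated_convergence[where w="f"])
    show "AE x in lborel. (\<lambda>k. f x * indicator {MM k<..} x) \<longlonglongrightarrow> f x * 0"
      using AE_ev_in
    proof eventually_elim
      case (elim x)
      then show ?case
      proof
        assume "\<forall>\<^sub>F k in sequentially. x \<in> {mm k..MM k}"
        then have "\<forall>\<^sub>F k in sequentially. f x * indicator {MM k<..} x = f x * 0"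
          by eventually_elim simp
        then show ?thesis by (rule tendsto_eventually)
      qed simp
    qed
    show "\<And>k. AE x in lborel. norm (f x * indicator {MM k<..} x) \<le> f x"
      by (auto simp: indicator_def f_nn)
  qed auto
  then show ?thesis by (simp add: e)
qed

lemma R_ident:
  assumes M: "M \<in> S" and rM: "r \<le> M"
  shows "(\<integral>x. indicator {r..M} x * (f x * g x) \<partial>lborel) = r * h r - M * h M"
proof -
  have id: "(\<integral>x. indicator {r..M} x * (f x * (x * 1 - x)) \<partial>lborel)
      = (\<integral>x. indicator {r..M} x * (1 * (x * f x - h x)) \<partial>lborel) + h M * II r M (\<lambda>_. 1) + h M * r - r * h r"
    by (rule ident[where B=1 and Q="\<lambda>_. 1" and U="\<lambda>x. x"]) (use rS M rM in auto)
  have "(\<integral>x. indicator {r..M} x * (1 * (x * f x - h x)) \<partial>lborel) = (\<integral>x. indicator {r..M} x * (f x * g x) \<partial>lborel)"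
  proof (rule Bochner_Integration.integral_cong[OF refl])
    fix x
    show "indicator {r..M} x * (1 * (x * f x - h x)) = indicator {r..M} x * (f x * g x)"
    proof (cases "x \<in> {r..M}")
      case True
      then have xS: "x \<in> S" using S_conn[OF rS M] by auto
      then have "g x = virt f x" using True by (simp add: g_def)
      then show ?thesis using True virt_f[OF xS] by (simp add: mult.commute)
    qed simp
  qed
  then show ?thesis using id rM by (simp add: II_const algebra_simps)
qed

lemma R_le: "M \<in> S \<Longrightarrow> r \<le> M \<Longrightarrow> M * h M \<le> r * h r"
proof -
  assume M: "M \<in> S" and rM: "r \<le> M"
  have "0 \<le> (\<integral>x. indicator {r..M} x * (f x * g x) \<partial>lborel)"
    by (rule integral_nonneg_AE) (auto intro!: AE_I2 mult_nonneg_nonneg f_nn g_nn)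
  then show ?thesis using R_ident[OF M rM] by simp
qed

lemma R_lower: "r \<le> M \<Longrightarrow> - \<bar>r\<bar> \<le> M * h M"
proof -
  assume rM: "r \<le> M"
  show ?thesis
  proof (cases "0 \<le> M")
    case True then show ?thesis using h_nn[of M] by (smt (verit) mult_nonneg_nonneg)
  next
    case False
    then have "M * h M \<ge> M" using h_le1[of M] h_nn[of M] by (smt (verit) mult_left_mono_neg mult.commute mult_cancel_left1)
    then show ?thesis using rM by simp
  qed
qed

lemma trunc_fg: "(\<integral>x. indicator {mm k..MM k} x * (f x * g x) \<partial>lborel) \<le> r * h r + \<bar>r\<bar>"
proof -
  have "(\<integral>x. indicator {mm k..MM k} x * (f x * g x) \<partial>lborel) = (\<integral>x. indicator {r..MM k} x * (f x * g x) \<partial>lborel)"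
    by (rule Bochner_Integration.integral_cong[OF refl]) (use mm_r[of k] in \<open>auto simp: indicator_def g_below\<close>)
  also have "\<dots> = r * h r - MM k * h (MM k)" by (rule R_ident[OF MM_S r_MM])
  also have "\<dots> \<le> r * h r + \<bar>r\<bar>" using R_lower[OF r_MM[of k]] by simp
  finally show ?thesis .
qed

lemma int_fg: "integrable lborel (\<lambda>x. f x * g x)"
proof -
  define C where "C = r * h r + \<bar>r\<bar>"
  have fgn: "0 \<le> f x * g x" for x by (simp add: f_nn g_nn)
  have trm: "(\<integral>\<^sup>+x. ennreal (indicator {mm k..MM k} x * (f x * g x)) \<partial>lborel) \<le> ennreal C" for k
  proof -
    have ii: "integrable lborel (\<lambda>x. indicator {mm k..MM k} x * (f x * g x))"
    proof (rule int_f_bdd[where C="\<bar>virt f (MM k)\<bar>"])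
      fix x assume x: "x \<in> {mm k..MM k}"
      then have xS: "x \<in> S" using S_conn[OF mm_S MM_S] by auto
      have "0 \<le> g x" "g x \<le> g (MM k)" using g_nn g_mono[OF xS MM_S] x by auto
      moreover have "g (MM k) \<le> \<bar>virt f (MM k)\<bar>" by (simp add: g_def abs_ge_self)
      ultimately show "\<bar>g x\<bar> \<le> \<bar>virt f (MM k)\<bar>" by simp
    qed simp
    have "(\<integral>\<^sup>+x. ennreal (indicator {mm k..MM k} x * (f x * g x)) \<partial>lborel) = ennreal (\<integral>x. indicator {mm k..MM k} x * (f x * g x) \<partial>lborel)"
      by (rule nn_integral_eq_integral[OF ii]) (simp add: fgn)
    also have "\<dots> \<le> ennreal C" using trunc_fg[of k] by (simp add: C_def ennreal_leI)
    finally show ?thesis .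
  qed
  have "(\<integral>\<^sup>+x. ennreal (f x * g x) \<partial>lborel) = (\<integral>\<^sup>+x. liminf (\<lambda>k. ennreal (indicator {mm k..MM k} x * (f x * g x))) \<partial>lborel)"
  proof (rule nn_integral_cong_AE)
    show "AE x in lborel. ennreal (f x * g x) = liminf (\<lambda>k. ennreal (indicator {mm k..MM k} x * (f x * g x)))"
      using AE_ev_in
    proof eventually_elim
      case (elim x)
      then show ?case
      proof
        assume "\<forall>\<^sub>F k in sequentially. x \<in> {mm k..MM k}"
        then have "\<forall>\<^sub>F k in sequentially. ennreal (indicator {mm k..MM k} x * (f x * g x)) = ennreal (f x * g x)"
          by eventually_elim simp
        then have "(\<lambda>k. ennreal (indicator {mm k..MM k} x * (f x * g x))) \<longlonglongrightarrow> ennreal (f x * g x)"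
          by (rule tendsto_eventually)
        then show ?thesis by (simp add: lim_imp_Liminf)
      qed (simp add: Liminf_const)
    qed
  qed
  also have "\<dots> \<le> liminf (\<lambda>k. \<integral>\<^sup>+x. ennreal (indicator {mm k..MM k} x * (f x * g x)) \<partial>lborel)"
    by (rule nn_integral_liminf) simp
  also have "\<dots> \<le> ennreal C"
    by (rule Liminf_le) (use trm in auto)
  finally have "(\<integral>\<^sup>+x. ennreal (f x * g x) \<partial>lborel) < \<infinity>" by (simp add: le_less_trans)
  then show ?thesis
    by (intro integrableI_nonneg) (auto simp: fgn)
qed

end


context mye
begin

lemma xf_h_int:
  fixes Q :: "real \<Rightarrow> real"
  assumes Qm[measurable]: "Q \<in> borel_measurable borel" and QB: "\<And>x. \<bar>Q x\<bar> \<le> B"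
  shows "integrable lborel (\<lambda>x. indicator {a..b} x * (Q x * (x * f x - h x)))"
proof -
  have i1: "integrable lborel (\<lambda>x. indicator {a..b} x * (f x * (x * Q x)))"
  proof (rule int_f_bdd[where C="(\<bar>a\<bar> + \<bar>b\<bar>) * B"])
    fix x assume x: "x \<in> {a..b}"
    have "\<bar>x * Q x\<bar> = \<bar>x\<bar> * \<bar>Q x\<bar>" by (simp add: abs_mult)
    also have "\<dots> \<le> (\<bar>a\<bar> + \<bar>b\<bar>) * B" using x QB[of x] by (intro mult_mono) auto
    finally show "\<bar>x * Q x\<bar> \<le> (\<bar>a\<bar> + \<bar>b\<bar>) * B" .
  qed simp
  have i2: "integrable lborel (\<lambda>x. indicator {a..b} x * (Q x * h x))"
  proof (rule int_bdd[where B=B])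
    fix x
    have "\<bar>Q x * h x\<bar> = \<bar>Q x\<bar> * h x" using h_nn[of x] by (simp add: abs_mult)
    also have "\<dots> \<le> B * 1" using QB[of x] h_le1[of x] h_nn[of x] by (intro mult_mono) auto
    finally show "\<bar>Q x * h x\<bar> \<le> B" by simp
  qed simp
  have "integrable lborel (\<lambda>x. indicator {a..b} x * (f x * (x * Q x)) - indicator {a..b} x * (Q x * h x))"
    using i1 i2 by simp
  then show ?thesis by (rule Bochner_Integration.integrable_cong[THEN iffD1, OF refl, rotated]) (simp add: algebra_simps)
qed

lemma fgQ_int_trunc:
  fixes Q :: "real \<Rightarrow> real"
  assumes Qm[measurable]: "Q \<in> borel_measurable borel" and QB: "\<And>x. \<bar>Q x\<bar> \<le> B"
  shows "integrable lborel (\<lambda>x. indicator {a..b} x * (f x * (g x * Q x)))"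
proof -
  have "integrable lborel (\<lambda>x. f x * g x * Q x)"
  proof (rule Bochner_Integration.integrable_bound[where f="\<lambda>x. B * (f x * g x)"])
    show "integrable lborel (\<lambda>x. B * (f x * g x))" using int_fg by simp
    show "AE x in lborel. norm (f x * g x * Q x) \<le> norm (B * (f x * g x))"
    proof (intro AE_I2)
      fix x
      have "\<bar>f x * g x * Q x\<bar> = (f x * g x) * \<bar>Q x\<bar>" using f_nn[of x] g_nn[of x] by (simp add: abs_mult)
      also have "\<dots> \<le> (f x * g x) * \<bar>B\<bar>" using QB[of x] f_nn[of x] g_nn[of x]
        by (intro mult_left_mono) auto
      finally show "norm (f x * g x * Q x) \<le> norm (B * (f x * g x))"
        using f_nn[of x] g_nn[of x] by (simp add: abs_mult mult.commute)
    qed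
  qed simp
  then have "integrable lborel (\<lambda>x. indicator {a..b} x * (f x * g x * Q x))"
  proof -
    assume a: "integrable lborel (\<lambda>x. f x * g x * Q x)"
    have "integrable lborel (\<lambda>x. f x * g x * Q x * indicator {a..b} x)"
      by (rule integrable_real_mult_indicator[OF _ a]) simp
    then show ?thesis by (simp add: mult_ac)
  qed
  then show ?thesis by (simp add: mult.assoc)
qed

lemma fgQ_int:
  fixes Q :: "real \<Rightarrow> real"
  assumes Qm[measurable]: "Q \<in> borel_measurable borel" and QB: "\<And>x. \<bar>Q x\<bar> \<le> B"
  shows "integrable lborel (\<lambda>x. f x * (g x * Q x))"
proof (rule Bochner_Integration.integrable_bound[where f="\<lambda>x. B * (f x * g x)"])
  show "integrable lborel (\<lambda>x. B * (f x * g x))" using int_fg by simp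
  show "AE x in lborel. norm (f x * (g x * Q x)) \<le> norm (B * (f x * g x))"
  proof (intro AE_I2)
    fix x
    have "\<bar>f x * (g x * Q x)\<bar> = (f x * g x) * \<bar>Q x\<bar>" using f_nn[of x] g_nn[of x] by (simp add: abs_mult)
    also have "\<dots> \<le> (f x * g x) * \<bar>B\<bar>" using QB[of x] f_nn[of x] g_nn[of x]
      by (intro mult_left_mono) auto
    finally show "norm (f x * (g x * Q x)) \<le> norm (B * (f x * g x))"
      using f_nn[of x] g_nn[of x] by (simp add: abs_mult mult.commute)
  qed
qed simp

lemma gen_bound:
  fixes Q U :: "real \<Rightarrow> real"
  assumes Qm[measurable]: "Q \<in> borel_measurable borel" and Q0: "\<And>x. 0 \<le> Q x" and QB: "\<And>x. Q x \<le> B"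
    and Qmono: "\<And>x y. x \<in> S \<Longrightarrow> y \<in> S \<Longrightarrow> x \<le> y \<Longrightarrow> Q x \<le> Q y"
    and IC: "\<And>x y. x \<in> S \<Longrightarrow> y \<in> S \<Longrightarrow> U y + (x - y) * Q y \<le> U x"
    and IR: "\<And>x. x \<in> S \<Longrightarrow> 0 \<le> U x"
  shows "(\<integral>x. indicator {mm k..MM k} x * (f x * (x * Q x - U x)) \<partial>lborel)
     \<le> (\<integral>x. indicator {mm k..MM k} x * (f x * (g x * Q x)) \<partial>lborel) + h (MM k) * ((MM k - r) * B) + h (MM k) * U r"
proof -
  have QBa: "\<And>x. \<bar>Q x\<bar> \<le> B" using Q0 QB by (simp add: abs_le_iff)
  have id: "(\<integral>x. indicator {mm k..MM k} x * (f x * (x * Q x - U x)) \<partial>lborel)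
      = (\<integral>x. indicator {mm k..MM k} x * (Q x * (x * f x - h x)) \<partial>lborel) + h (MM k) * II r (MM k) Q + h (MM k) * U r - U (mm k) * h (mm k)"
    by (rule ident[OF Qm Q0 QB Qmono IC mm_S MM_S mm_r r_MM])
  have a: "(\<integral>x. indicator {mm k..MM k} x * (Q x * (x * f x - h x)) \<partial>lborel) \<le> (\<integral>x. indicator {mm k..MM k} x * (f x * (g x * Q x)) \<partial>lborel)"
  proof (rule integral_mono[OF xf_h_int[OF Qm QBa] fgQ_int_trunc[OF Qm QBa]])
    fix x
    show "indicator {mm k..MM k} x * (Q x * (x * f x - h x)) \<le> indicator {mm k..MM k} x * (f x * (g x * Q x))"
    proof (cases "x \<in> {mm k..MM k}")
      case True
      then have xS: "x \<in> S" using S_conn[OF mm_S MM_S] by auto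
      have "Q x * (x * f x - h x) = Q x * (virt f x * f x)" using virt_f[OF xS] by simp
      also have "\<dots> \<le> Q x * (g x * f x)"
        using virt_le_g[OF xS] f_nn[of x] Q0[of x] by (intro mult_left_mono mult_right_mono) auto
      finally show ?thesis using True by (simp add: algebra_simps)
    qed simp
  qed
  have b: "II r (MM k) Q \<le> (MM k - r) * B" by (rule II_le[OF Qm Q0 QB r_MM])
  have c: "0 \<le> U (mm k) * h (mm k)" using IR[OF mm_S] h_nn by simp
  have "h (MM k) * II r (MM k) Q \<le> h (MM k) * ((MM k - r) * B)" using b h_nn by (rule mult_left_mono)
  then show ?thesis using id a c by linarith
qed

lemma spa_eq:
  fixes Q U :: "real \<Rightarrow> real"
  assumes Qm[measurable]: "Q \<in> borel_measurable borel" and Q0: "\<And>x. 0 \<le> Q x" and QB: "\<And>x. Q x \<le> B"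
    and Qmono: "\<And>x y. x \<in> S \<Longrightarrow> y \<in> S \<Longrightarrow> x \<le> y \<Longrightarrow> Q x \<le> Q y"
    and IC: "\<And>x y. x \<in> S \<Longrightarrow> y \<in> S \<Longrightarrow> U y + (x - y) * Q y \<le> U x"
    and U0: "\<And>x. x \<in> S \<Longrightarrow> x \<le> r \<Longrightarrow> U x = 0"
    and Qlow: "\<And>x. x < r \<Longrightarrow> Q x = 0"
  shows "(\<integral>x. indicator {mm k..MM k} x * (f x * (x * Q x - U x)) \<partial>lborel)
     = (\<integral>x. indicator {mm k..MM k} x * (f x * (g x * Q x)) \<partial>lborel) + h (MM k) * II r (MM k) Q"
proof -
  have id: "(\<integral>x. indicator {mm k..MM k} x * (f x * (x * Q x - U x)) \<partial>lborel)
      = (\<integral>x. indicator {mm k..MM k} x * (Q x * (x * f x - h x)) \<partial>lborel) + h (MM k) * II r (MM k) Q + h (MM k) * U r - U (mm k) * h (mm k)"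
    by (rule ident[OF Qm Q0 QB Qmono IC mm_S MM_S mm_r r_MM])
  have a: "(\<integral>x. indicator {mm k..MM k} x * (Q x * (x * f x - h x)) \<partial>lborel) = (\<integral>x. indicator {mm k..MM k} x * (f x * (g x * Q x)) \<partial>lborel)"
  proof (rule Bochner_Integration.integral_cong[OF refl])
    fix x
    show "indicator {mm k..MM k} x * (Q x * (x * f x - h x)) = indicator {mm k..MM k} x * (f x * (g x * Q x))"
    proof (cases "x \<in> {mm k..MM k}")
      case True
      then have xS: "x \<in> S" using S_conn[OF mm_S MM_S] by auto
      show ?thesis
      proof (cases "x < r")
        case True then show ?thesis by (simp add: Qlow)
      next
        case False
        then have "g x = virt f x" using xS by (simp add: g_def)
        then have e: "x * f x - h x = g x * f x" using virt_f[OF xS] by simp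
        show ?thesis by (simp add: e algebra_simps)
      qed
    qed simp
  qed
  show ?thesis using id a U0[OF rS] U0[OF mm_S mm_r] by simp
qed

lemma II_h_bound:
  assumes K: "r \<le> K" and M: "r \<le> M"
  shows "II r M h \<le> (K - r) + (M - r) * h K"
proof -
  have "II r M h \<le> II r M (\<lambda>s. indicator {r..K} s + h K)"
  proof (rule II_mono[where B=2])
    fix x
    show "\<bar>h x\<bar> \<le> 2" using h_nn[of x] h_le1[of x] by simp
    show "\<bar>indicator {r..K} x + h K\<bar> \<le> 2" using h_nn[of K] h_le1[of K] by (simp add: indicator_def)
    assume x: "x \<in> {r..M}"
    show "h x \<le> indicator {r..K} x + h K"
    proof (cases "x \<le> K")
      case True then show ?thesis using x h_le1[of x] h_nn[of K] by (simp add: indicator_def)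
    next
      case False then show ?thesis using h_anti[of K x] h_nn[of K] by (simp add: indicator_def)
    qed
  qed simp_all
  also have "\<dots> = II r M (indicator {r..K}) + (M - r) * h K"
  proof -
    have i1: "integrable lborel (\<lambda>s. indicator {r..M} s * (indicator {r..K} s :: real))"
      by (rule int_bdd[where B=1]) (auto simp: indicator_def)
    have i2: "integrable lborel (\<lambda>s. indicator {r..M} s * h K)"
      by (rule int_bdd[where B="\<bar>h K\<bar>"]) auto
    have "II r M (\<lambda>s. indicator {r..K} s + h K) = (\<integral>s. indicator {r..M} s * indicator {r..K} s + indicator {r..M} s * h K \<partial>lborel)"
      unfolding II_def by (simp add: distrib_left)
    also have "\<dots> = II r M (indicator {r..K}) + II r M (\<lambda>_. h K)"
      using i1 i2 unfolding II_def by simp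
    finally have "II r M (\<lambda>s. indicator {r..K} s + h K) = II r M (indicator {r..K}) + II r M (\<lambda>_. h K)" .
    then show ?thesis using M by (simp add: II_const)
  qed
  also have "II r M (indicator {r..K}) \<le> K - r"
  proof -
    have "II r M (indicator {r..K}) \<le> (\<integral>s. indicator {r..K} s \<partial>lborel)"
    proof -
      have i1: "integrable lborel (\<lambda>s. indicator {r..M} s * (indicator {r..K} s :: real))"
        by (rule int_bdd[where B=1]) (auto simp: indicator_def)
      have i2: "integrable lborel (\<lambda>s. (indicator {r..K} s :: real))"
        by (rule integrable_real_indicator) (auto simp: emeasure_lborel_Icc_eq)
      show ?thesis unfolding II_def by (rule integral_mono[OF i1 i2]) (auto simp: indicator_def)
    qed
    also have "\<dots> = K - r" using K by simp
    finally show ?thesis .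
  qed
  finally show ?thesis by simp
qed

lemma err_lim: "(\<lambda>k. h (MM k) * II r (MM k) h) \<longlonglongrightarrow> 0"
proof (rule LIMSEQ_I)
  fix e :: real assume e: "0 < e"
  define C0 where "C0 = r * h r + \<bar>r\<bar> + 1"
  have C0: "0 < C0" using R_lower[of r] by (simp add: C0_def)
  have hM: "h (MM k) * (MM k - r) \<le> C0" for k
  proof -
    have a: "MM k * h (MM k) \<le> r * h r" by (rule R_le[OF MM_S r_MM])
    have b1: "- r * h (MM k) \<le> \<bar>r\<bar> * h (MM k)" using h_nn[of "MM k"] by (intro mult_right_mono) auto
    have b2: "\<bar>r\<bar> * h (MM k) \<le> \<bar>r\<bar>" using h_nn[of "MM k"] h_le1[of "MM k"] by (intro mult_right_le_one_le) auto
    have e: "h (MM k) * (MM k - r) = MM k * h (MM k) + (- r * h (MM k))" by (simp add: algebra_simps)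
    show ?thesis unfolding e C0_def using a b1 b2 by linarith
  qed
  have "\<forall>\<^sub>F j in sequentially. h (MM j) < e / (2 * C0)"
    using h_MM_lim e C0 by (auto simp: tendsto_iff dist_real_def dest!: spec[where x="e / (2 * C0)"]
        elim!: eventually_mono)
  then obtain j where j: "h (MM j) < e / (2 * C0)" by (meson eventually_sequentially le_refl)
  define K where "K = MM j"
  have K: "r \<le> K" by (simp add: K_def r_MM)
  have "\<forall>\<^sub>F k in sequentially. h (MM k) * (K - r + 1) < e / 2"
  proof -
    have "(\<lambda>k. h (MM k) * (K - r + 1)) \<longlonglongrightarrow> 0 * (K - r + 1)"
      by (intro tendsto_intros h_MM_lim)
    then show ?thesis using e by (auto simp: tendsto_iff dist_real_def dest!: spec[where x="e / 2"] elim!: eventually_mono)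
  qed
  then obtain N where N: "\<And>k. N \<le> k \<Longrightarrow> h (MM k) * (K - r + 1) < e / 2"
    by (auto simp: eventually_sequentially)
  show "\<exists>no. \<forall>k\<ge>no. norm (h (MM k) * II r (MM k) h - 0) < e"
  proof (intro exI allI impI)
    fix k assume k: "N \<le> k"
    have II0: "0 \<le> II r (MM k) h" by (rule II_nn[OF h_nn])
    have "h (MM k) * II r (MM k) h \<le> h (MM k) * ((K - r) + (MM k - r) * h K)"
      by (rule mult_left_mono[OF II_h_bound[OF K r_MM] h_nn])
    also have "\<dots> = h (MM k) * (K - r) + (h (MM k) * (MM k - r)) * h K" by (simp add: algebra_simps)
    also have "\<dots> \<le> h (MM k) * (K - r + 1) + C0 * h K"
      using hM[of k] h_nn[of K] h_nn[of "MM k"] by (intro add_mono mult_right_mono) (auto simp: algebra_simps)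
    also have "\<dots> < e / 2 + C0 * (e / (2 * C0))"
      using N[OF k] j C0 by (intro add_strict_mono mult_strict_left_mono) (auto simp: K_def)
    also have "\<dots> = e" using C0 by simp
    finally show "norm (h (MM k) * II r (MM k) h - 0) < e"
      using II0 h_nn[of "MM k"] by simp
  qed
qed

lemma combine:
  fixes Qg Ug Qs Us :: "nat \<Rightarrow> real \<Rightarrow> real" and NN :: "nat \<Rightarrow> real" and n :: nat and C :: real
  assumes Qgm: "\<And>i. i < n \<Longrightarrow> Qg i \<in> borel_measurable borel"
    and Ugm: "\<And>i. i < n \<Longrightarrow> Ug i \<in> borel_measurable borel"
    and Qg0: "\<And>i x. i < n \<Longrightarrow> 0 \<le> Qg i x" and QgB: "\<And>i x. i < n \<Longrightarrow> Qg i x \<le> NN i"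
    and Qgmono: "\<And>i x y. i < n \<Longrightarrow> x \<in> S \<Longrightarrow> y \<in> S \<Longrightarrow> x \<le> y \<Longrightarrow> Qg i x \<le> Qg i y"
    and ICg: "\<And>i x y. i < n \<Longrightarrow> x \<in> S \<Longrightarrow> y \<in> S \<Longrightarrow> Ug i y + (x - y) * Qg i y \<le> Ug i x"
    and IRg: "\<And>i x. i < n \<Longrightarrow> x \<in> S \<Longrightarrow> 0 \<le> Ug i x"
    and intg: "\<And>i. i < n \<Longrightarrow> integrable lborel (\<lambda>x. f x * (x * Qg i x - Ug i x))"
    and Qsm: "\<And>i. i < n \<Longrightarrow> Qs i \<in> borel_measurable borel"
    and Usm: "\<And>i. i < n \<Longrightarrow> Us i \<in> borel_measurable borel"
    and Qs0: "\<And>i x. i < n \<Longrightarrow> 0 \<le> Qs i x" and QsB: "\<And>i x. i < n \<Longrightarrow> Qs i x \<le> NN i"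
    and Qsmono: "\<And>i x y. i < n \<Longrightarrow> x \<in> S \<Longrightarrow> y \<in> S \<Longrightarrow> x \<le> y \<Longrightarrow> Qs i x \<le> Qs i y"
    and ICs: "\<And>i x y. i < n \<Longrightarrow> x \<in> S \<Longrightarrow> y \<in> S \<Longrightarrow> Us i y + (x - y) * Qs i y \<le> Us i x"
    and Us0: "\<And>i x. i < n \<Longrightarrow> x \<in> S \<Longrightarrow> x \<le> r \<Longrightarrow> Us i x = 0"
    and Qslow: "\<And>i x. i < n \<Longrightarrow> x < r \<Longrightarrow> Qs i x = 0"
    and ints: "\<And>i. i < n \<Longrightarrow> integrable lborel (\<lambda>x. f x * (x * Qs i x - Us i x))"
    and gap: "\<And>i s. i < n \<Longrightarrow> s \<in> S \<Longrightarrow> r \<le> s \<Longrightarrow> NN i - Qs i s \<le> C * h s"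
    and VS: "(\<Sum>i<n. \<integral>x. f x * (g x * Qg i x) \<partial>lborel) \<le> (\<Sum>i<n. \<integral>x. f x * (g x * Qs i x) \<partial>lborel)"
  shows "(\<Sum>i<n. \<integral>x. f x * (x * Qg i x - Ug i x) \<partial>lborel) \<le> (\<Sum>i<n. \<integral>x. f x * (x * Qs i x - Us i x) \<partial>lborel)"
proof -
  define a where "a k = (\<Sum>i<n. \<integral>x. indicator {mm k..MM k} x * (f x * (x * Qg i x - Ug i x)) \<partial>lborel)" for k
  define b where "b k = (\<Sum>i<n. \<integral>x. indicator {mm k..MM k} x * (f x * (x * Qs i x - Us i x)) \<partial>lborel)" for k
  define c where "c k = (\<Sum>i<n. \<integral>x. indicator {mm k..MM k} x * (f x * (g x * Qg i x)) \<partial>lborel)" for k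
  define d where "d k = (\<Sum>i<n. \<integral>x. indicator {mm k..MM k} x * (f x * (g x * Qs i x)) \<partial>lborel)" for k
  define e where "e k = h (MM k) * (real n * C * II r (MM k) h + (\<Sum>i<n. Ug i r))" for k
  have NN0: "\<And>i. i < n \<Longrightarrow> 0 \<le> NN i" using Qg0 QgB order_trans by blast
  have step: "a k \<le> b k + c k - d k + e k" for k
  proof -
    let ?M = "MM k"
    have ga: "(\<integral>x. indicator {mm k..?M} x * (f x * (x * Qg i x - Ug i x)) \<partial>lborel)
       \<le> (\<integral>x. indicator {mm k..?M} x * (f x * (g x * Qg i x)) \<partial>lborel) + h ?M * ((?M - r) * NN i) + h ?M * Ug i r"
      if i: "i < n" for i
      by (rule gen_bound[OF Qgm Qg0 QgB Qgmono ICg IRg]) (use i in auto)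
    have sb: "(\<integral>x. indicator {mm k..?M} x * (f x * (x * Qs i x - Us i x)) \<partial>lborel)
       = (\<integral>x. indicator {mm k..?M} x * (f x * (g x * Qs i x)) \<partial>lborel) + h ?M * II r ?M (Qs i)"
      if i: "i < n" for i
      by (rule spa_eq[OF Qsm Qs0 QsB Qsmono ICs Us0 Qslow]) (use i in auto)
    have gp: "h ?M * ((?M - r) * NN i) \<le> h ?M * II r ?M (Qs i) + h ?M * (C * II r ?M h)"
      if i: "i < n" for i
    proof -
      have m1[measurable]: "Qs i \<in> borel_measurable borel" using Qsm i by simp
      have "II r ?M (\<lambda>s. NN i - Qs i s) \<le> II r ?M (\<lambda>s. C * h s)"
      proof (rule II_mono[where B="NN i + \<bar>C\<bar>"])
        fix x
        show "\<bar>NN i - Qs i x\<bar> \<le> NN i + \<bar>C\<bar>" using Qs0[OF i, of x] QsB[OF i, of x] by simp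
        have "\<bar>C * h x\<bar> \<le> \<bar>C\<bar> * 1" using h_nn[of x] h_le1[of x] by (simp add: abs_mult mult_left_le)
        then show "\<bar>C * h x\<bar> \<le> NN i + \<bar>C\<bar>" using NN0[OF i] by simp
        assume x: "x \<in> {r..?M}"
        then have "x \<in> S" using S_conn[OF rS MM_S] by auto
        then show "NN i - Qs i x \<le> C * h x" using gap[OF i] x by auto
      qed simp_all
      moreover have "II r ?M (\<lambda>s. NN i - Qs i s) = (?M - r) * NN i - II r ?M (Qs i)"
      proof -
        have i1: "integrable lborel (\<lambda>s. indicator {r..?M} s * NN i)" by (rule int_bdd[where B="\<bar>NN i\<bar>"]) auto
        have i2: "integrable lborel (\<lambda>s. indicator {r..?M} s * Qs i s)"
          by (rule int_bdd[where B="NN i"]) (use Qs0[OF i] QsB[OF i] in auto)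
        have "II r ?M (\<lambda>s. NN i - Qs i s) = (\<integral>s. indicator {r..?M} s * NN i - indicator {r..?M} s * Qs i s \<partial>lborel)"
          unfolding II_def by (simp add: algebra_simps)
        also have "\<dots> = II r ?M (\<lambda>_. NN i) - II r ?M (Qs i)" using i1 i2 unfolding II_def by simp
        finally show ?thesis using r_MM[of k] by (simp add: II_const)
      qed
      moreover have "II r ?M (\<lambda>s. C * h s) = C * II r ?M h" unfolding II_def by (simp add: algebra_simps)
      ultimately have "(?M - r) * NN i \<le> II r ?M (Qs i) + C * II r ?M h" by simp
      then show ?thesis using h_nn[of ?M] by (simp add: distrib_left[symmetric] mult_left_mono)
    qed
    have "a k \<le> (\<Sum>i<n. (\<integral>x. indicator {mm k..?M} x * (f x * (g x * Qg i x)) \<partial>lborel) + h ?M * ((?M - r) * NN i) + h ?M * Ug i r)"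
      unfolding a_def by (rule sum_mono) (rule ga, simp)
    also have "\<dots> \<le> (\<Sum>i<n. (\<integral>x. indicator {mm k..?M} x * (f x * (g x * Qg i x)) \<partial>lborel) + (h ?M * II r ?M (Qs i) + h ?M * (C * II r ?M h)) + h ?M * Ug i r)"
      by (rule sum_mono) (use gp in simp)
    also have "\<dots> = c k + (\<Sum>i<n. h ?M * II r ?M (Qs i)) + e k"
      by (simp add: c_def e_def sum.distrib sum_distrib_left algebra_simps)
    also have "(\<Sum>i<n. h ?M * II r ?M (Qs i)) = b k - d k"
      by (simp add: b_def d_def sb sum.distrib sum_subtractf[symmetric])
    finally show ?thesis by simp
  qed
  have la: "a \<longlonglongrightarrow> (\<Sum>i<n. \<integral>x. f x * (x * Qg i x - Ug i x) \<partial>lborel)"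
    unfolding a_def
  proof (rule tendsto_sum)
    fix i assume "i \<in> {..<n}"
    then have i: "i < n" by simp
    have [measurable]: "Qg i \<in> borel_measurable borel" "Ug i \<in> borel_measurable borel" using Qgm Ugm i by auto
    show "(\<lambda>k. \<integral>x. indicator {mm k..MM k} x * (f x * (x * Qg i x - Ug i x)) \<partial>lborel) \<longlonglongrightarrow> (\<integral>x. f x * (x * Qg i x - Ug i x) \<partial>lborel)"
      by (rule lim_trunc[OF _ intg[OF i]]) measurable
  qed
  have lb: "b \<longlonglongrightarrow> (\<Sum>i<n. \<integral>x. f x * (x * Qs i x - Us i x) \<partial>lborel)"
    unfolding b_def
  proof (rule tendsto_sum)
    fix i assume "i \<in> {..<n}"
    then have i: "i < n" by simp
    have [measurable]: "Qs i \<in> borel_measurable borel" "Us i \<in> borel_measurable borel" using Qsm Usm i by auto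
    show "(\<lambda>k. \<integral>x. indicator {mm k..MM k} x * (f x * (x * Qs i x - Us i x)) \<partial>lborel) \<longlonglongrightarrow> (\<integral>x. f x * (x * Qs i x - Us i x) \<partial>lborel)"
      by (rule lim_trunc[OF _ ints[OF i]]) measurable
  qed
  have lc: "c \<longlonglongrightarrow> (\<Sum>i<n. \<integral>x. f x * (g x * Qg i x) \<partial>lborel)"
    unfolding c_def
  proof (rule tendsto_sum)
    fix i assume "i \<in> {..<n}"
    then have i: "i < n" by simp
    have [measurable]: "Qg i \<in> borel_measurable borel" using Qgm i by auto
    have b: "\<And>x. \<bar>Qg i x\<bar> \<le> NN i" using Qg0[OF i] QgB[OF i] by (simp add: abs_le_iff)
    have m0: "Qg i \<in> borel_measurable borel" using Qgm i by auto
    have m1: "(\<lambda>x. g x * Qg i x) \<in> borel_measurable borel" using m0 by measurable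
    show "(\<lambda>k. \<integral>x. indicator {mm k..MM k} x * (f x * (g x * Qg i x)) \<partial>lborel) \<longlonglongrightarrow> (\<integral>x. f x * (g x * Qg i x) \<partial>lborel)"
      by (rule lim_trunc[OF m1 fgQ_int[OF m0 b]])
  qed
  have ld: "d \<longlonglongrightarrow> (\<Sum>i<n. \<integral>x. f x * (g x * Qs i x) \<partial>lborel)"
    unfolding d_def
  proof (rule tendsto_sum)
    fix i assume "i \<in> {..<n}"
    then have i: "i < n" by simp
    have [measurable]: "Qs i \<in> borel_measurable borel" using Qsm i by auto
    have b: "\<And>x. \<bar>Qs i x\<bar> \<le> NN i" using Qs0[OF i] QsB[OF i] by (simp add: abs_le_iff)
    have m0: "Qs i \<in> borel_measurable borel" using Qsm i by auto
    have m1: "(\<lambda>x. g x * Qs i x) \<in> borel_measurable borel" using m0 by measurable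
    show "(\<lambda>k. \<integral>x. indicator {mm k..MM k} x * (f x * (g x * Qs i x)) \<partial>lborel) \<longlonglongrightarrow> (\<integral>x. f x * (g x * Qs i x) \<partial>lborel)"
      by (rule lim_trunc[OF m1 fgQ_int[OF m0 b]])
  qed
  have le: "e \<longlonglongrightarrow> 0"
  proof -
    have "(\<lambda>k. real n * C * (h (MM k) * II r (MM k) h) + h (MM k) * (\<Sum>i<n. Ug i r)) \<longlonglongrightarrow> real n * C * 0 + 0 * (\<Sum>i<n. Ug i r)"
      by (intro tendsto_intros err_lim h_MM_lim)
    moreover have "e = (\<lambda>k. real n * C * (h (MM k) * II r (MM k) h) + h (MM k) * (\<Sum>i<n. Ug i r))"
      by (simp add: e_def fun_eq_iff algebra_simps)
    ultimately show ?thesis by simp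
  qed
  have "(\<Sum>i<n. \<integral>x. f x * (x * Qg i x - Ug i x) \<partial>lborel)
      \<le> (\<Sum>i<n. \<integral>x. f x * (x * Qs i x - Us i x) \<partial>lborel) + (\<Sum>i<n. \<integral>x. f x * (g x * Qg i x) \<partial>lborel)
         - (\<Sum>i<n. \<integral>x. f x * (g x * Qs i x) \<partial>lborel) + 0"
    by (rule LIMSEQ_le[OF la tendsto_add[OF tendsto_diff[OF tendsto_add[OF lb lc] ld] le]]) (use step in auto)
  then show ?thesis using VS by simp
qed

end


lemma partsets_finite[simp]: "finite (partsets n T)"
  by (simp add: partsets_def)

lemma pweight_nn:
  assumes "\<forall>i<n. 0 \<le> \<alpha> i \<and> \<alpha> i \<le> 1"
  shows "0 \<le> pweight \<alpha> n T z"
  unfolding pweight_def using assms by (intro prod_nonneg) auto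

lemma Ez_mono:
  assumes "\<forall>i<n. 0 \<le> \<alpha> i \<and> \<alpha> i \<le> 1" and "\<And>z. a z \<le> b z"
  shows "Ez \<alpha> n T a \<le> Ez \<alpha> n T b"
  unfolding Ez_def using assms pweight_nn[OF assms(1)] by (intro sum_mono mult_left_mono) auto

lemma Ez_diff: "Ez \<alpha> n T (\<lambda>z. a z - b z) = Ez \<alpha> n T a - Ez \<alpha> n T b"
  unfolding Ez_def by (simp add: right_diff_distrib sum_subtractf)

lemma Ez_add: "Ez \<alpha> n T (\<lambda>z. a z + b z) = Ez \<alpha> n T a + Ez \<alpha> n T b"
  unfolding Ez_def by (simp add: distrib_left sum.distrib)

lemma Ez_cmult: "Ez \<alpha> n T (\<lambda>z. c * a z) = c * Ez \<alpha> n T a"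
  unfolding Ez_def by (simp add: sum_distrib_left mult_ac)

lemma Ez_const: "Ez \<alpha> n T (\<lambda>z. c) = c * Ez \<alpha> n T (\<lambda>z. 1)"
  unfolding Ez_def by (simp add: sum_distrib_left mult_ac)

lemma Ez_sum: "Ez \<alpha> n T (\<lambda>z. \<Sum>i\<in>I. a i z) = (\<Sum>i\<in>I. Ez \<alpha> n T (a i))"
  unfolding Ez_def by (simp add: sum_distrib_left sum.swap[of _ I])

lemma Ez_cong: "(\<And>z. z \<in> partsets n T \<Longrightarrow> a z = b z) \<Longrightarrow> Ez \<alpha> n T a = Ez \<alpha> n T b"
  unfolding Ez_def by simp

lemma integrable_Ez:
  fixes F :: "'a \<Rightarrow> (nat \<times> nat) set \<Rightarrow> real"
  assumes "\<And>z. integrable M (\<lambda>v. F v z)"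
  shows "integrable M (\<lambda>v. Ez \<alpha> n T (F v))"
  unfolding Ez_def by (rule Bochner_Integration.integrable_sum) (use assms in auto)

lemma integral_Ez:
  fixes F :: "'a \<Rightarrow> (nat \<times> nat) set \<Rightarrow> real"
  assumes "\<And>z. integrable M (\<lambda>v. F v z)"
  shows "(\<integral>v. Ez \<alpha> n T (F v) \<partial>M) = Ez \<alpha> n T (\<lambda>z. \<integral>v. F v z \<partial>M)"
  unfolding Ez_def using assms by (simp add: integral_sum integrable_mult_right)

lemma measurable_Ez[measurable (raw)]:
  fixes F :: "'a \<Rightarrow> (nat \<times> nat) set \<Rightarrow> real"
  assumes "\<And>z. (\<lambda>v. F v z) \<in> borel_measurable M"
  shows "(\<lambda>v. Ez \<alpha> n T (F v)) \<in> borel_measurable M"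
  unfolding Ez_def using assms by measurable

locale mech = mye +
  fixes \<alpha> :: "nat \<Rightarrow> real" and n T :: nat
  assumes n1: "1 \<le> n" and alpha: "\<forall>i<n. 0 \<le> \<alpha> i \<and> \<alpha> i \<le> 1"
begin

abbreviation "PN \<equiv> PiM {..<n} (\<lambda>_. M1)"

lemma profM_eq: "profM f n = PN"
  by (simp add: profM_def)

sublocale PNP: finite_product_prob_space "\<lambda>_. M1" "{..<n}"
  by (simp add: finite_product_prob_space.intro finite_product_sigma_finite.intro
      finite_product_sigma_finite_axioms.intro product_prob_space.intro product_prob_space_axioms.intro
      product_sigma_finite.intro prob_M1 prob_space_imp_sigma_finite)

lemma space_PN: "v \<in> space PN \<Longrightarrow> j < n \<Longrightarrow> v j \<in> UNIV" by simp

lemma comp_meas1: "j < n \<Longrightarrow> (\<lambda>v. v j) \<in> measurable PN M1"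
  using measurable_component_singleton[of j "{..<n}" "\<lambda>_. M1"] by simp

lemma comp_meas[measurable]: "j < n \<Longrightarrow> (\<lambda>v. v j) \<in> measurable PN borel"
  using comp_meas1 measurable_cong_sets[OF refl sets_M1] by blast

lemma distr_comp:
  assumes j: "j < n"
  shows "distr PN M1 (\<lambda>v. v j) = M1"
proof (rule measure_eqI)
  show "sets (distr PN M1 (\<lambda>v. v j)) = sets M1" by simp
  fix A assume A: "A \<in> sets (distr PN M1 (\<lambda>v. v j))"
  then have A': "A \<in> sets borel" by simp
  have m: "(\<lambda>v. v j) \<in> measurable PN M1" using comp_meas1[OF j] .
  have "emeasure (distr PN M1 (\<lambda>v. v j)) A = (\<integral>\<^sup>+x. indicator A x \<partial>distr PN M1 (\<lambda>v. v j))"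
    using A by simp
  also have "\<dots> = (\<integral>\<^sup>+v. indicator A (v j) \<partial>PN)"
    by (rule nn_integral_distr[OF m]) (rule borel_measurable_indicator, use A' in simp)
  also have "\<dots> = (\<integral>\<^sup>+x. (\<integral>\<^sup>+v. indicator A ((v(j := x)) j) \<partial>PN) \<partial>M1)"
    by (rule swap_nn[OF prob_M1 j]) (use A' j in measurable)
  also have "\<dots> = (\<integral>\<^sup>+x. indicator A x \<partial>M1)"
    by (simp add: PNP.emeasure_space_1)
  also have "\<dots> = emeasure M1 A" using A' by simp
  finally show "emeasure (distr PN M1 (\<lambda>v. v j)) A = emeasure M1 A" .
qed

lemma comp_integrable:
  fixes u :: "real \<Rightarrow> real"
  assumes j: "j < n" and [measurable]: "u \<in> borel_measurable borel" and int: "integrable M1 u"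
  shows "integrable PN (\<lambda>v. u (v j))"
proof -
  have [measurable]: "u \<in> borel_measurable M1" using measurable_cong_sets[OF sets_M1 refl] assms(2) by blast
  have m: "(\<lambda>v. v j) \<in> measurable PN M1" using comp_meas1[OF j] .
  have "integrable (distr PN M1 (\<lambda>v. v j)) u" using distr_comp[OF j] int by simp
  then show ?thesis using integrable_distr_eq[OF m, of u] by simp
qed

lemma comp_integral:
  fixes u :: "real \<Rightarrow> real"
  assumes j: "j < n" and [measurable]: "u \<in> borel_measurable borel"
  shows "(\<integral>v. u (v j) \<partial>PN) = (\<integral>x. u x \<partial>M1)"
proof -
  have [measurable]: "u \<in> borel_measurable M1" using measurable_cong_sets[OF sets_M1 refl] assms(2) by blast
  have m: "(\<lambda>v. v j) \<in> measurable PN M1" using comp_meas1[OF j] .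
  have "(\<integral>x. u x \<partial>distr PN M1 (\<lambda>v. v j)) = (\<integral>v. u (v j) \<partial>PN)"
    by (rule integral_distr[OF m]) simp
  then show ?thesis using distr_comp[OF j] by simp
qed

lemma comp_nn_integral:
  fixes u :: "real \<Rightarrow> ennreal"
  assumes j: "j < n" and [measurable]: "u \<in> borel_measurable borel"
  shows "(\<integral>\<^sup>+v. u (v j) \<partial>PN) = (\<integral>\<^sup>+x. u x \<partial>M1)"
proof -
  have [measurable]: "u \<in> borel_measurable M1" using measurable_cong_sets[OF sets_M1 refl] assms(2) by blast
  have m: "(\<lambda>v. v j) \<in> measurable PN M1" using comp_meas1[OF j] .
  have "(\<integral>\<^sup>+x. u x \<partial>distr PN M1 (\<lambda>v. v j)) = (\<integral>\<^sup>+v. u (v j) \<partial>PN)"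
    by (rule nn_integral_distr[OF m]) simp
  then show ?thesis using distr_comp[OF j] by simp
qed

lemma AE_PN_S: "AE v in PN. \<forall>j\<in>{..<n}. v j \<in> S"
proof (rule eventually_ball_finite)
  show "\<forall>j\<in>{..<n}. AE v in PN. v j \<in> S"
  proof
    fix j assume "j \<in> {..<n}"
    then have j: "j < n" by simp
    have m: "(\<lambda>v. v j) \<in> measurable PN M1" using comp_meas1[OF j] .
    have "AE x in distr PN M1 (\<lambda>v. v j). x \<in> S" unfolding distr_comp[OF j] by (rule AE_M1_S)
    then show "AE v in PN. v j \<in> S" by (subst (asm) AE_distr_iff[OF m]) auto
  qed
qed simp

end


context mech
begin

definition Qm :: "alloc \<Rightarrow> nat \<Rightarrow> real \<Rightarrow> real" where
  "Qm q i x = (\<integral>v. Ez \<alpha> n T (\<lambda>z. \<Sum>t<T. q (v(i := x)) z t i) \<partial>PN)"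

definition Pm :: "pay \<Rightarrow> nat \<Rightarrow> real \<Rightarrow> real" where
  "Pm p i x = (\<integral>v. Ez \<alpha> n T (\<lambda>z. p (v(i := x)) z i) \<partial>PN)"

definition NN :: "nat \<Rightarrow> real" where
  "NN i = Ez \<alpha> n T (\<lambda>z. \<Sum>t<T. if (t, i) \<in> z then 1 else 0)"

lemma meas_upd_pair:
  assumes i: "i < n"
  shows "(\<lambda>(x, v). v(i := x)) \<in> measurable (borel \<Otimes>\<^sub>M PN) PN"
proof -
  have "(\<lambda>(x, v). v(i := x)) \<in> measurable (M1 \<Otimes>\<^sub>M PN) PN" by (rule meas_upd3[OF prob_M1 i])
  then show ?thesis using measurable_cong_sets[OF sets_pair_measure_cong[OF sets_M1 refl] refl] by blast
qed

lemma param_meas: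
  fixes G :: "(nat \<Rightarrow> real) \<Rightarrow> real"
  assumes i: "i < n" and G[measurable]: "G \<in> borel_measurable PN"
  shows "(\<lambda>x. \<integral>v. G (v(i := x)) \<partial>PN) \<in> borel_measurable borel"
proof -
  have "(\<lambda>p. G ((\<lambda>(x, v). v(i := x)) p)) \<in> borel_measurable (borel \<Otimes>\<^sub>M PN)"
    using measurable_comp[OF meas_upd_pair[OF i] G] by (simp add: comp_def)
  then have "(\<lambda>(x, v). G (v(i := x))) \<in> borel_measurable (borel \<Otimes>\<^sub>M PN)"
    by (simp add: case_prod_beta')
  then show ?thesis by (rule PNP.borel_measurable_lebesgue_integral[where f="\<lambda>x v. G (v(i := x))"])
qed

lemma upd_meas:
  fixes G :: "(nat \<Rightarrow> real) \<Rightarrow> real"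
  assumes i: "i < n" and G[measurable]: "G \<in> borel_measurable PN"
  shows "(\<lambda>v. G (v(i := x))) \<in> borel_measurable PN"
  using measurable_comp[OF meas_upd_x[OF prob_M1 i, of x] G] by (simp add: comp_def)

context
  fixes q :: alloc and p :: pay
  assumes adm: "admissible f S \<alpha> n T q p"
begin

lemma q0: "0 \<le> q b z t i" using adm by (simp add: admissible_def)
lemma qsum: "(\<Sum>i<n. q b z t i) \<le> 1" using adm by (simp add: admissible_def)
lemma qnp: "(t, i) \<notin> z \<Longrightarrow> q b z t i = 0" using adm by (simp add: admissible_def)
lemma qm[measurable]: "(\<lambda>v. q v z t i) \<in> borel_measurable PN" using adm by (simp add: admissible_def profM_def)
lemma pint: "integrable PN (\<lambda>v. p v z i)" using adm by (simp add: admissible_def profM_def)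
lemma pm[measurable]: "(\<lambda>v. p v z i) \<in> borel_measurable PN" using pint by auto
lemma pint_upd: "i < n \<Longrightarrow> y \<in> S \<Longrightarrow> integrable PN (\<lambda>v. p (v(i := y)) z i)"
  using adm by (simp add: admissible_def profM_def)
lemma util_IC: "i < n \<Longrightarrow> x \<in> S \<Longrightarrow> y \<in> S \<Longrightarrow> util f \<alpha> n T q p i x y \<le> util f \<alpha> n T q p i x x"
  using adm by (simp add: admissible_def)
lemma util_IR: "i < n \<Longrightarrow> x \<in> S \<Longrightarrow> 0 \<le> util f \<alpha> n T q p i x x"
  using adm by (simp add: admissible_def)

lemma q_le: "i < n \<Longrightarrow> q b z t i \<le> (if (t, i) \<in> z then 1 else 0)"
proof -
  assume i: "i < n"
  have "q b z t i \<le> (\<Sum>j<n. q b z t j)"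
    by (rule member_le_sum) (use i q0 in auto)
  then show ?thesis using qsum[of b z t] qnp[of t i z b] by auto
qed

lemma Ezq_bounds:
  assumes i: "i < n"
  shows "0 \<le> Ez \<alpha> n T (\<lambda>z. \<Sum>t<T. q b z t i)" "Ez \<alpha> n T (\<lambda>z. \<Sum>t<T. q b z t i) \<le> NN i"
proof -
  have "Ez \<alpha> n T (\<lambda>z. 0) \<le> Ez \<alpha> n T (\<lambda>z. \<Sum>t<T. q b z t i)"
    by (rule Ez_mono[OF alpha]) (auto intro!: sum_nonneg q0)
  then show "0 \<le> Ez \<alpha> n T (\<lambda>z. \<Sum>t<T. q b z t i)" by (simp add: Ez_def)
  show "Ez \<alpha> n T (\<lambda>z. \<Sum>t<T. q b z t i) \<le> NN i"
    unfolding NN_def by (rule Ez_mono[OF alpha]) (auto intro!: sum_mono q_le[OF i])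
qed

lemma Ezq_meas[measurable]: "i < n \<Longrightarrow> (\<lambda>v. Ez \<alpha> n T (\<lambda>z. \<Sum>t<T. q (v(i := x)) z t i)) \<in> borel_measurable PN"
  by (intro measurable_Ez borel_measurable_sum upd_meas qm) auto

lemma Ezq_int: "i < n \<Longrightarrow> integrable PN (\<lambda>v. Ez \<alpha> n T (\<lambda>z. \<Sum>t<T. q (v(i := x)) z t i))"
proof -
  assume i: "i < n"
  show ?thesis
  proof (rule PNP.integrable_const_bound[where B="NN i"])
    show "AE v in PN. norm (Ez \<alpha> n T (\<lambda>z. \<Sum>t<T. q (v(i := x)) z t i)) \<le> NN i"
      using Ezq_bounds[OF i] by (intro AE_I2) simp
  qed (rule Ezq_meas[OF i])
qed

lemma Qm_bounds: "i < n \<Longrightarrow> 0 \<le> Qm q i x \<and> Qm q i x \<le> NN i"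
proof -
  assume i: "i < n"
  have "0 \<le> Qm q i x" unfolding Qm_def by (rule integral_nonneg_AE) (use Ezq_bounds[OF i] in auto)
  moreover have "Qm q i x \<le> (\<integral>v. NN i \<partial>PN)" unfolding Qm_def
    by (rule integral_mono[OF Ezq_int[OF i]]) (use Ezq_bounds[OF i] in auto)
  ultimately show ?thesis by (simp add: prob_space.prob_space[OF PNP.prob_space_axioms])
qed

lemma Qm_meas[measurable]: "i < n \<Longrightarrow> Qm q i \<in> borel_measurable borel"
proof -
  assume i: "i < n"
  have "(\<lambda>v. Ez \<alpha> n T (\<lambda>z. \<Sum>t<T. q v z t i)) \<in> borel_measurable PN" by measurable
  from param_meas[OF i this] show ?thesis unfolding Qm_def[abs_def] .
qed

lemma Pm_meas[measurable]: "i < n \<Longrightarrow> Pm p i \<in> borel_measurable borel"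
proof -
  assume i: "i < n"
  have "(\<lambda>v. Ez \<alpha> n T (\<lambda>z. p v z i)) \<in> borel_measurable PN" by measurable
  from param_meas[OF i this] show ?thesis unfolding Pm_def[abs_def] .
qed

lemma util_eq:
  assumes i: "i < n" and y: "y \<in> S"
  shows "util f \<alpha> n T q p i x y = x * Qm q i y - Pm p i y"
proof -
  have ip: "integrable PN (\<lambda>v. Ez \<alpha> n T (\<lambda>z. p (v(i := y)) z i))"
    by (rule integrable_Ez) (rule pint_upd[OF i y])
  have "util f \<alpha> n T q p i x y = (\<integral>v. x * Ez \<alpha> n T (\<lambda>z. \<Sum>t<T. q (v(i := y)) z t i) - Ez \<alpha> n T (\<lambda>z. p (v(i := y)) z i) \<partial>PN)"
    unfolding util_def profM_def by (simp add: Ez_diff Ez_cmult)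
  also have "\<dots> = x * Qm q i y - Pm p i y"
    unfolding Qm_def Pm_def using Ezq_int[OF i, of y] ip by simp
  finally show ?thesis .
qed

lemma IC_Um:
  assumes i: "i < n" and x: "x \<in> S" and y: "y \<in> S"
  shows "(y * Qm q i y - Pm p i y) + (x - y) * Qm q i y \<le> x * Qm q i x - Pm p i x"
  using util_IC[OF i x y] util_eq[OF i y, of x] util_eq[OF i x, of x] by (simp add: algebra_simps)

lemma IR_Um: "i < n \<Longrightarrow> x \<in> S \<Longrightarrow> 0 \<le> x * Qm q i x - Pm p i x"
  using util_IR util_eq by fastforce

lemma Qm_mono:
  assumes i: "i < n" and x: "x \<in> S" and y: "y \<in> S" and xy: "x \<le> y"
  shows "Qm q i x \<le> Qm q i y"
proof -
  have a: "(x * Qm q i x - Pm p i x) + (y - x) * Qm q i x \<le> y * Qm q i y - Pm p i y" by (rule IC_Um[OF i y x])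
  have b: "(y * Qm q i y - Pm p i y) + (x - y) * Qm q i y \<le> x * Qm q i x - Pm p i x" by (rule IC_Um[OF i x y])
  from a b have "(y - x) * (Qm q i x - Qm q i y) \<le> 0" by (simp add: algebra_simps)
  then show ?thesis using xy by (cases "x = y") (auto simp: mult_le_0_iff)
qed

lemma Pm_int_M1: "i < n \<Longrightarrow> integrable M1 (Pm p i)"
proof -
  assume i: "i < n"
  have "integrable PN (\<lambda>v. Ez \<alpha> n T (\<lambda>z. p v z i))" by (rule integrable_Ez) (rule pint)
  from swap_int(1)[OF prob_M1 i this] show ?thesis unfolding Pm_def[abs_def] .
qed

lemma Pm_int: "i < n \<Longrightarrow> integrable lborel (\<lambda>x. f x * Pm p i x)"
  using Pm_int_M1 integrable_M1[OF Pm_meas] by blast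

lemma revenue_eq: "revenue f \<alpha> n T q p = (\<Sum>i<n. \<integral>x. f x * Pm p i x \<partial>lborel)"
proof -
  have ii: "\<And>i. integrable PN (\<lambda>v. Ez \<alpha> n T (\<lambda>z. p v z i))" by (rule integrable_Ez) (rule pint)
  have "revenue f \<alpha> n T q p = (\<integral>v. (\<Sum>i<n. Ez \<alpha> n T (\<lambda>z. p v z i)) \<partial>PN)"
    unfolding revenue_def profM_def by (simp add: Ez_sum)
  also have "\<dots> = (\<Sum>i<n. \<integral>v. Ez \<alpha> n T (\<lambda>z. p v z i) \<partial>PN)"
    by (rule Bochner_Integration.integral_sum) (rule ii)
  also have "\<dots> = (\<Sum>i<n. \<integral>x. Pm p i x \<partial>M1)"
  proof (rule sum.cong[OF refl])
    fix i assume "i \<in> {..<n}"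
    then have i: "i < n" by simp
    show "(\<integral>v. Ez \<alpha> n T (\<lambda>z. p v z i) \<partial>PN) = (\<integral>x. Pm p i x \<partial>M1)"
      unfolding Pm_def by (rule swap_int(2)[OF prob_M1 i ii])
  qed
  also have "\<dots> = (\<Sum>i<n. \<integral>x. f x * Pm p i x \<partial>lborel)"
    by (rule sum.cong[OF refl]) (rule integral_M1, simp)
  finally show ?thesis .
qed

lemma g_int_M1: "integrable M1 (\<lambda>x. c * g x)"
  using integrable_M1[of "\<lambda>x. c * g x"] int_fg by (simp add: mult.left_commute)

lemma vs_G_int:
  assumes i: "i < n"
  shows "integrable PN (\<lambda>v. g (v i) * Ez \<alpha> n T (\<lambda>z. \<Sum>t<T. q v z t i))"
proof (rule Bochner_Integration.integrable_bound)
  show "integrable PN (\<lambda>v. NN i * g (v i))"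
    by (rule comp_integrable[OF i _ g_int_M1]) simp
  show "(\<lambda>v. g (v i) * Ez \<alpha> n T (\<lambda>z. \<Sum>t<T. q v z t i)) \<in> borel_measurable PN"
    using i by measurable
  show "AE v in PN. norm (g (v i) * Ez \<alpha> n T (\<lambda>z. \<Sum>t<T. q v z t i)) \<le> norm (NN i * g (v i))"
  proof (intro AE_I2)
    fix v
    have "\<bar>g (v i) * Ez \<alpha> n T (\<lambda>z. \<Sum>t<T. q v z t i)\<bar> = g (v i) * Ez \<alpha> n T (\<lambda>z. \<Sum>t<T. q v z t i)"
      using g_nn Ezq_bounds(1)[OF i] by simp
    also have "\<dots> \<le> g (v i) * NN i" using g_nn Ezq_bounds(2)[OF i] by (intro mult_left_mono) auto
    also have "\<dots> \<le> \<bar>NN i * g (v i)\<bar>" by (simp add: mult.commute)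
    finally show "norm (g (v i) * Ez \<alpha> n T (\<lambda>z. \<Sum>t<T. q v z t i)) \<le> norm (NN i * g (v i))" by simp
  qed
qed

lemma vs_form:
  assumes i: "i < n"
  shows "(\<integral>x. f x * (g x * Qm q i x) \<partial>lborel) = (\<integral>v. g (v i) * Ez \<alpha> n T (\<lambda>z. \<Sum>t<T. q v z t i) \<partial>PN)"
proof -
  have "(\<integral>v. g (v i) * Ez \<alpha> n T (\<lambda>z. \<Sum>t<T. q v z t i) \<partial>PN)
      = (\<integral>x. (\<integral>v. g ((v(i := x)) i) * Ez \<alpha> n T (\<lambda>z. \<Sum>t<T. q (v(i := x)) z t i) \<partial>PN) \<partial>M1)"
    by (rule swap_int(2)[OF prob_M1 i vs_G_int[OF i]])
  also have "\<dots> = (\<integral>x. g x * Qm q i x \<partial>M1)"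
    unfolding Qm_def by simp
  also have "\<dots> = (\<integral>x. f x * (g x * Qm q i x) \<partial>lborel)"
    by (rule integral_M1) (use i in measurable)
  finally show ?thesis by simp
qed

end

lemma vs_point:
  fixes q :: "nat \<Rightarrow> real" and v :: "nat \<Rightarrow> real"
  assumes q0: "\<And>j. 0 \<le> q j" and qs: "(\<Sum>j<n. q j) \<le> 1" and qnp: "\<And>j. (t, j) \<notin> z \<Longrightarrow> q j = 0"
    and vS: "\<forall>j\<in>{..<n}. v j \<in> S"
  shows "(\<Sum>j<n. g (v j) * q j) \<le> (\<Sum>j<n. g (v j) * spa_alloc n r v z t j)"
proof (cases "spa_winners n r v z t = {}")
  case True
  have "g (v j) * q j = 0" if j: "j < n" for j
  proof (cases "(t, j) \<in> z")
    case True
    have "v j < r"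
    proof (rule ccontr)
      assume "\<not> v j < r"
      then have rj: "r \<le> v j" by simp
      define P where "P = {k. k < n \<and> (t, k) \<in> z}"
      have fin: "finite (v ` P)" unfolding P_def by simp
      have ne: "v ` P \<noteq> {}" using j True by (auto simp: P_def)
      obtain w where w: "w \<in> P" "v w = Max (v ` P)"
        using Max_in[OF fin ne] by auto
      have "\<forall>k<n. (t, k) \<in> z \<longrightarrow> v k \<le> v w" using w fin by (auto simp: P_def)
      moreover have "v j \<le> v w" using j True w fin by (auto simp: P_def)
      ultimately have "w \<in> spa_winners n r v z t" using w rj by (auto simp: spa_winners_def P_def)
      then show False using \<open>spa_winners n r v z t = {}\<close> by simp
    qed
    then show ?thesis by (simp add: g_below)
  qed (simp add: qnp)
  then have "(\<Sum>j<n. g (v j) * q j) = 0" by (intro sum.neutral) auto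
  moreover have "0 \<le> (\<Sum>j<n. g (v j) * spa_alloc n r v z t j)"
    by (intro sum_nonneg mult_nonneg_nonneg g_nn spa_alloc_nonneg)
  ultimately show ?thesis by simp
next
  case False
  then obtain w where w: "w \<in> spa_winners n r v z t" by blast
  let ?W = "spa_winners n r v z t"
  have wn: "w < n" using w by (simp add: spa_winners_def)
  have geq: "g (v j) = g (v w)" if "j \<in> ?W" for j
  proof -
    have "v j = v w" using that w by (auto simp: spa_winners_def intro: antisym)
    then show ?thesis by simp
  qed
  have le: "g (v j) * q j \<le> g (v w) * q j" if j: "j < n" for j
  proof (cases "(t, j) \<in> z")
    case True
    then have "v j \<le> v w" using w j by (simp add: spa_winners_def)
    then have "g (v j) \<le> g (v w)" using g_mono vS j wn by auto
    then show ?thesis using q0[of j] by (intro mult_right_mono) auto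
  qed (simp add: qnp)
  have "(\<Sum>j<n. g (v j) * q j) \<le> (\<Sum>j<n. g (v w) * q j)" by (rule sum_mono) (use le in auto)
  also have "\<dots> = g (v w) * (\<Sum>j<n. q j)" by (simp add: sum_distrib_left)
  also have "\<dots> \<le> g (v w) * 1" using qs g_nn[of "v w"] by (intro mult_left_mono) auto
  also have "\<dots> = (\<Sum>j<n. g (v j) * spa_alloc n r v z t j)"
  proof -
    have "(\<Sum>j<n. g (v j) * spa_alloc n r v z t j) = (\<Sum>j<n. if j \<in> ?W then g (v j) * (1 / real (card ?W)) else 0)"
      by (rule sum.cong) (auto simp: spa_alloc_def)
    also have "\<dots> = (\<Sum>j\<in>{..<n} \<inter> ?W. g (v j) * (1 / real (card ?W)))"
      by (rule sum.inter_restrict[symmetric]) simp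
    also have "{..<n} \<inter> ?W = ?W" using spa_winners_sub by blast
    finally have "(\<Sum>j<n. g (v j) * spa_alloc n r v z t j) = (\<Sum>j\<in>?W. g (v j) * (1 / real (card ?W)))" .
    also have "\<dots> = (\<Sum>j\<in>?W. g (v w) * (1 / real (card ?W)))" by (rule sum.cong) (auto simp: geq)
    also have "\<dots> = g (v w)" using False by simp
    finally show ?thesis by simp
  qed
  finally show ?thesis .
qed

end


lemma win_iff: "j \<in> spa_winners n r v z t \<longleftrightarrow> (j < n \<and> (t, j) \<in> z \<and> r \<le> v j \<and> (\<forall>k\<in>{..<n}. (t, k) \<in> z \<longrightarrow> v k \<le> v j))"
  by (auto simp: spa_winners_def)

lemma card_win: "real (card (spa_winners n r v z t)) = (\<Sum>j<n. if j \<in> spa_winners n r v z t then 1 else 0)"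
proof -
  have "(\<Sum>j<n. if j \<in> spa_winners n r v z t then 1 else 0) = (\<Sum>j\<in>{..<n} \<inter> spa_winners n r v z t. (1::real))"
    by (rule sum.inter_restrict[symmetric]) simp
  also have "{..<n} \<inter> spa_winners n r v z t = spa_winners n r v z t" using spa_winners_sub by blast
  finally show ?thesis by simp
qed

lemma price_eq:
  "spa_price n r v z t i = Max ((\<lambda>k. if k = n then r else v k) ` insert n {j. j < n \<and> (t, j) \<in> z \<and> j \<noteq> i})"
  unfolding spa_price_def
  by (rule arg_cong[where f=Max]) (auto simp: image_iff)

lemma round_pay_bound:
  assumes i: "i < n"
  shows "\<bar>spa_round_pay n r b z t i\<bar> \<le> 2 * \<bar>r\<bar> + (\<Sum>j\<in>{..<n} - {i}. max 0 (min (b i) (b j)))"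
proof -
  let ?R = "2 * \<bar>r\<bar> + (\<Sum>j\<in>{..<n} - {i}. max 0 (min (b i) (b j)))"
  have Rnn: "0 \<le> (\<Sum>j\<in>{..<n} - {i}. max 0 (min (b i) (b j)))" by (intro sum_nonneg) auto
  show ?thesis
  proof (cases "i \<in> spa_winners n r b z t")
    case False
    then show ?thesis using Rnn by (simp add: spa_round_pay_def spa_alloc_def)
  next
    case True
    let ?p = "spa_price n r b z t i"
    have pr: "r \<le> ?p" by (rule spa_price_ge_r)
    have pb: "?p \<le> b i" by (rule spa_price_le_winner[OF True])
    have a01: "0 \<le> spa_alloc n r b z t i" "spa_alloc n r b z t i \<le> 1"
      by (rule spa_alloc_nonneg, rule spa_alloc_le1)
    have pay: "\<bar>spa_round_pay n r b z t i\<bar> \<le> \<bar>?p\<bar>"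
      unfolding spa_round_pay_def using a01 by (simp add: abs_mult mult_left_le_one_le)
    have "?p \<in> insert r {b j | j. j < n \<and> (t, j) \<in> z \<and> j \<noteq> i}"
      unfolding spa_price_def by (rule Max_in[OF spa_price_fin]) simp
    then consider "?p = r" | j where "j < n" "(t, j) \<in> z" "j \<noteq> i" "?p = b j" by blast
    then have "\<bar>?p\<bar> \<le> ?R"
    proof cases
      case 1 then show ?thesis using Rnn by simp
    next
      case (2 j)
      have "b j \<le> b i" using True 2 by (simp add: spa_winners_def)
      then have mj: "max 0 (min (b i) (b j)) = max 0 ?p" using 2 by simp
      have "max 0 (min (b i) (b j)) \<le> (\<Sum>j\<in>{..<n} - {i}. max 0 (min (b i) (b j)))"
        by (rule member_le_sum) (use 2 in auto)
      then have "max 0 ?p \<le> (\<Sum>j\<in>{..<n} - {i}. max 0 (min (b i) (b j)))" using mj by simp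
      moreover have "\<bar>?p\<bar> \<le> \<bar>r\<bar> + max 0 ?p" using pr by linarith
      ultimately show ?thesis using abs_ge_zero[of r] by linarith
    qed
    then show ?thesis using pay by simp
  qed
qed

lemma round_pay_zero_ge: "\<not> i < n \<Longrightarrow> spa_round_pay n r b z t i = 0"
  by (simp add: spa_round_pay_def spa_alloc_ge_n)

lemma spa_IR_point:
  shows "0 \<le> x * spa_alloc n r (b(i := x)) z t i - spa_round_pay n r (b(i := x)) z t i"
proof (cases "i \<in> spa_winners n r (b(i := x)) z t")
  case True
  have "spa_price n r (b(i := x)) z t i \<le> x" using spa_price_le_winner[OF True] by simp
  then have "spa_alloc n r (b(i := x)) z t i * spa_price n r (b(i := x)) z t i \<le> spa_alloc n r (b(i := x)) z t i * x"
    using spa_alloc_nonneg[of n r "b(i := x)" z t i] by (rule mult_left_mono)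
  then show ?thesis by (simp add: spa_round_pay_def algebra_simps)
next
  case False then show ?thesis by (simp add: spa_round_pay_def spa_alloc_def)
qed

context mech
begin

lemma pred_win: "{v \<in> space PN. j \<in> spa_winners n r v z t} \<in> sets PN"
proof (cases "j < n")
  case True
  have "{v \<in> space PN. (t, k) \<in> z \<longrightarrow> v k \<le> v j} \<in> sets PN" if k: "k \<in> {..<n}" for k
  proof -
    have "{v \<in> space PN. (t, k) \<in> z \<longrightarrow> v k \<le> v j} = (if (t, k) \<in> z then {v \<in> space PN. v k \<le> v j} else space PN)"
      by auto
    moreover have "{v \<in> space PN. v k \<le> v j} \<in> sets PN"
      by (rule borel_measurable_le[OF comp_meas comp_meas]) (use k True in auto)
    ultimately show ?thesis by simp
  qed
  then have a: "{v \<in> space PN. \<forall>k\<in>{..<n}. (t, k) \<in> z \<longrightarrow> v k \<le> v j} \<in> sets PN"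
    by (intro sets.sets_Collect_finite_All) auto
  have b: "{v \<in> space PN. r \<le> v j} \<in> sets PN"
    by (rule borel_measurable_le[OF borel_measurable_const comp_meas[OF True]])
  have eq: "{v \<in> space PN. j \<in> spa_winners n r v z t}
      = (if (t, j) \<in> z then {v \<in> space PN. r \<le> v j} \<inter> {v \<in> space PN. \<forall>k\<in>{..<n}. (t, k) \<in> z \<longrightarrow> v k \<le> v j} else {})"
    using True by (auto simp: win_iff)
  show ?thesis unfolding eq using a b by (cases "(t, j) \<in> z") auto
next
  case False
  then have e: "{v \<in> space PN. j \<in> spa_winners n r v z t} = {}" by (auto simp: win_iff)
  show ?thesis unfolding e by simp
qed

lemma ind_win_meas: "(\<lambda>v. if j \<in> spa_winners n r v z t then (1::real) else 0) \<in> borel_measurable PN"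
proof -
  have m: "indicator {v \<in> space PN. j \<in> spa_winners n r v z t} \<in> borel_measurable PN"
    by (rule borel_measurable_indicator[OF pred_win])
  have e: "\<And>v. v \<in> space PN \<Longrightarrow> indicator {v \<in> space PN. j \<in> spa_winners n r v z t} v = (if j \<in> spa_winners n r v z t then (1::real) else 0)"
    by (simp add: indicator_def)
  show ?thesis using m
    by (subst measurable_cong[where g="indicator {v \<in> space PN. j \<in> spa_winners n r v z t}"]) (auto simp: indicator_def)
qed

lemma alloc_meas: "(\<lambda>v. spa_alloc n r v z t i) \<in> borel_measurable PN"
proof -
  have e: "(\<lambda>v. spa_alloc n r v z t i) = (\<lambda>v. (if i \<in> spa_winners n r v z t then 1 else 0) / (\<Sum>j<n. if j \<in> spa_winners n r v z t then 1 else 0))"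
    by (simp add: spa_alloc_def card_win fun_eq_iff)
  show ?thesis unfolding e
    by (intro borel_measurable_divide borel_measurable_sum ind_win_meas)
qed

lemma price_meas: "(\<lambda>v. spa_price n r v z t i) \<in> borel_measurable PN"
proof -
  have "(\<lambda>v. Max ((\<lambda>k. (\<lambda>k v. if k = n then r else v k) k v) ` insert n {j. j < n \<and> (t, j) \<in> z \<and> j \<noteq> i})) \<in> borel_measurable PN"
  proof (rule borel_measurable_Max)
    show "finite (insert n {j. j < n \<and> (t, j) \<in> z \<and> j \<noteq> i})" by simp
    fix k assume k: "k \<in> insert n {j. j < n \<and> (t, j) \<in> z \<and> j \<noteq> i}"
    show "(\<lambda>v. if k = n then r else v k) \<in> borel_measurable PN"
    proof (cases "k = n")
      case False then have "k < n" using k by auto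
      then show ?thesis using False comp_meas by simp
    qed simp
  qed
  then show ?thesis by (simp add: price_eq[abs_def])
qed

lemma pay_meas: "(\<lambda>v. spa_pay n T r v z i) \<in> borel_measurable PN"
  unfolding spa_pay_def spa_round_pay_def
  by (intro borel_measurable_sum borel_measurable_times alloc_meas price_meas)

lemma C1_bound: "x \<in> S \<Longrightarrow> max 0 x * h x \<le> \<bar>r * h r\<bar> + \<bar>r\<bar>"
proof -
  assume x: "x \<in> S"
  show ?thesis
  proof (cases "r \<le> x")
    case True
    show ?thesis
    proof (cases "0 \<le> x")
      case True
      then have "max 0 x * h x = x * h x" by simp
      also have "\<dots> \<le> r * h r" by (rule R_le[OF x \<open>r \<le> x\<close>])
      finally show ?thesis by simp
    next
      case False then show ?thesis by simp
    qed
  next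
    case False
    then have "max 0 x \<le> \<bar>r\<bar>" by simp
    then have "max 0 x * h x \<le> \<bar>r\<bar> * 1" using h_nn[of x] h_le1[of x] by (intro mult_mono) auto
    then show ?thesis by simp
  qed
qed

lemma half_bound:
  assumes a: "a < n" and b: "b < n" and ab: "a \<noteq> b"
  shows "(\<integral>\<^sup>+v. ennreal (max 0 (v a) * indicator {v a..} (v b)) \<partial>PN) \<le> ennreal (\<bar>r * h r\<bar> + \<bar>r\<bar>)"
proof -
  have m: "(\<lambda>v. ennreal (max 0 (v a) * indicator {v a..} (v b))) \<in> borel_measurable PN"
  proof -
    have "(\<lambda>v. ennreal (max 0 (v a) * (if v a \<le> v b then 1 else 0))) \<in> borel_measurable PN"
      using a b by measurable
    moreover have "(\<lambda>v. ennreal (max 0 (v a) * indicator {v a..} (v b))) = (\<lambda>v. ennreal (max 0 (v a) * (if v a \<le> v b then 1 else 0)))"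
      by (simp add: fun_eq_iff indicator_def)
    ultimately show ?thesis by simp
  qed
  have "(\<integral>\<^sup>+v. ennreal (max 0 (v a) * indicator {v a..} (v b)) \<partial>PN)
      = (\<integral>\<^sup>+x. (\<integral>\<^sup>+v. ennreal (max 0 ((v(a := x)) a) * indicator {(v(a := x)) a..} ((v(a := x)) b)) \<partial>PN) \<partial>M1)"
    by (rule swap_nn[OF prob_M1 a m])
  also have "\<dots> = (\<integral>\<^sup>+x. ennreal (max 0 x) * (\<integral>\<^sup>+v. indicator {x..} (v b) \<partial>PN) \<partial>M1)"
  proof (rule nn_integral_cong)
    fix x
    have "(\<integral>\<^sup>+v. ennreal (max 0 ((v(a := x)) a) * indicator {(v(a := x)) a..} ((v(a := x)) b)) \<partial>PN)
       = (\<integral>\<^sup>+v. ennreal (max 0 x) * indicator {x..} (v b) \<partial>PN)"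
      using ab by (intro nn_integral_cong) (simp add: ennreal_mult'' indicator_def)
    also have "\<dots> = ennreal (max 0 x) * (\<integral>\<^sup>+v. indicator {x..} (v b) \<partial>PN)"
      by (rule nn_integral_cmult) (use b in measurable)
    finally show "(\<integral>\<^sup>+v. ennreal (max 0 ((v(a := x)) a) * indicator {(v(a := x)) a..} ((v(a := x)) b)) \<partial>PN)
       = ennreal (max 0 x) * (\<integral>\<^sup>+v. indicator {x..} (v b) \<partial>PN)" .
  qed
  also have "\<dots> = (\<integral>\<^sup>+x. ennreal (max 0 x * h x) \<partial>M1)"
  proof (rule nn_integral_cong)
    fix x
    have "(\<integral>\<^sup>+v. indicator {x..} (v b) \<partial>PN) = (\<integral>\<^sup>+y. indicator {x..} y \<partial>M1)"
      by (rule comp_nn_integral[OF b]) simp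
    also have "\<dots> = emeasure M1 {x..}" by simp
    also have "\<dots> = ennreal (h x)" by (simp add: h_eq' M1.emeasure_eq_measure)
    finally show "ennreal (max 0 x) * (\<integral>\<^sup>+v. indicator {x..} (v b) \<partial>PN) = ennreal (max 0 x * h x)"
      by (simp add: ennreal_mult'' h_nn)
  qed
  also have "\<dots> \<le> (\<integral>\<^sup>+x. ennreal (\<bar>r * h r\<bar> + \<bar>r\<bar>) \<partial>M1)"
  proof (rule nn_integral_mono_AE)
    show "AE x in M1. ennreal (max 0 x * h x) \<le> ennreal (\<bar>r * h r\<bar> + \<bar>r\<bar>)"
      using AE_M1_S by eventually_elim (rule ennreal_leI, rule C1_bound)
  qed
  also have "\<dots> = ennreal (\<bar>r * h r\<bar> + \<bar>r\<bar>)" using M1.emeasure_space_1 by simp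
  finally show ?thesis .
qed

lemma minpos_int:
  assumes a: "a < n" and b: "b < n" and ab: "a \<noteq> b"
  shows "integrable PN (\<lambda>v. max 0 (min (v a) (v b)))"
proof (rule integrableI_nonneg)
  show "(\<lambda>v. max 0 (min (v a) (v b))) \<in> borel_measurable PN" using a b by measurable
  show "AE v in PN. 0 \<le> max 0 (min (v a) (v b))" by simp
  have le: "ennreal (max 0 (min (v a) (v b))) \<le> ennreal (max 0 (v a) * indicator {v a..} (v b)) + ennreal (max 0 (v b) * indicator {v b..} (v a))" for v
    by (cases "v a \<le> v b") (auto simp: indicator_def intro: ennreal_leI)
  have "(\<integral>\<^sup>+v. ennreal (max 0 (min (v a) (v b))) \<partial>PN)
      \<le> (\<integral>\<^sup>+v. ennreal (max 0 (v a) * indicator {v a..} (v b)) + ennreal (max 0 (v b) * indicator {v b..} (v a)) \<partial>PN)"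
    by (rule nn_integral_mono) (rule le)
  also have "\<dots> = (\<integral>\<^sup>+v. ennreal (max 0 (v a) * indicator {v a..} (v b)) \<partial>PN) + (\<integral>\<^sup>+v. ennreal (max 0 (v b) * indicator {v b..} (v a)) \<partial>PN)"
  proof (rule nn_integral_add)
    show "(\<lambda>v. ennreal (max 0 (v a) * indicator {v a..} (v b))) \<in> borel_measurable PN"
    proof -
      have "(\<lambda>v. ennreal (max 0 (v a) * (if v a \<le> v b then 1 else 0))) \<in> borel_measurable PN"
        using a b by measurable
      moreover have "(\<lambda>v. ennreal (max 0 (v a) * indicator {v a..} (v b))) = (\<lambda>v. ennreal (max 0 (v a) * (if v a \<le> v b then 1 else 0)))"
        by (simp add: fun_eq_iff indicator_def)
      ultimately show ?thesis by simp
    qed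
    show "(\<lambda>v. ennreal (max 0 (v b) * indicator {v b..} (v a))) \<in> borel_measurable PN"
    proof -
      have "(\<lambda>v. ennreal (max 0 (v b) * (if v b \<le> v a then 1 else 0))) \<in> borel_measurable PN"
        using a b by measurable
      moreover have "(\<lambda>v. ennreal (max 0 (v b) * indicator {v b..} (v a))) = (\<lambda>v. ennreal (max 0 (v b) * (if v b \<le> v a then 1 else 0)))"
        by (simp add: fun_eq_iff indicator_def)
      ultimately show ?thesis by simp
    qed
  qed
  also have "\<dots> \<le> ennreal (\<bar>r * h r\<bar> + \<bar>r\<bar>) + ennreal (\<bar>r * h r\<bar> + \<bar>r\<bar>)"
    by (intro add_mono half_bound) (use a b ab in auto)
  also have "\<dots> = ennreal ((\<bar>r * h r\<bar> + \<bar>r\<bar>) + (\<bar>r * h r\<bar> + \<bar>r\<bar>))"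
    by (rule ennreal_plus[symmetric]) auto
  also have "\<dots> < \<infinity>" by simp
  finally show "(\<integral>\<^sup>+v. ennreal (max 0 (min (v a) (v b))) \<partial>PN) < \<infinity>" .
qed

lemma round_pay_meas: "(\<lambda>v. spa_round_pay n r v z t i) \<in> borel_measurable PN"
  unfolding spa_round_pay_def by (intro borel_measurable_times alloc_meas price_meas)

lemma round_pay_int: "integrable PN (\<lambda>v. spa_round_pay n r v z t i)"
proof (cases "i < n")
  case False then show ?thesis by (simp add: round_pay_zero_ge)
next
  case True
  show ?thesis
  proof (rule Bochner_Integration.integrable_bound)
    show "integrable PN (\<lambda>v. 2 * \<bar>r\<bar> + (\<Sum>j\<in>{..<n} - {i}. max 0 (min (v i) (v j))))"
      using True by (intro Bochner_Integration.integrable_add Bochner_Integration.integrable_sum minpos_int) auto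
    show "(\<lambda>v. spa_round_pay n r v z t i) \<in> borel_measurable PN" by (rule round_pay_meas)
    show "AE v in PN. norm (spa_round_pay n r v z t i) \<le> norm (2 * \<bar>r\<bar> + (\<Sum>j\<in>{..<n} - {i}. max 0 (min (v i) (v j))))"
      using round_pay_bound[OF True] by (intro AE_I2) (smt (verit) real_norm_def)
  qed
qed

lemma pay_int: "integrable PN (\<lambda>v. spa_pay n T r v z i)"
  unfolding spa_pay_def by (intro Bochner_Integration.integrable_sum round_pay_int)

lemma round_pay_upd_int:
  assumes i: "i < n"
  shows "integrable PN (\<lambda>v. spa_round_pay n r (v(i := y)) z t i)"
proof (rule PNP.integrable_const_bound[where B="2 * \<bar>r\<bar> + real n * max 0 y"])
  show "(\<lambda>v. spa_round_pay n r (v(i := y)) z t i) \<in> borel_measurable PN"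
    by (rule upd_meas[OF i round_pay_meas])
  show "AE v in PN. norm (spa_round_pay n r (v(i := y)) z t i) \<le> 2 * \<bar>r\<bar> + real n * max 0 y"
  proof (intro AE_I2)
    fix v
    have "(\<Sum>j\<in>{..<n} - {i}. max 0 (min ((v(i := y)) i) ((v(i := y)) j))) \<le> (\<Sum>j\<in>{..<n} - {i}. max 0 y)"
      by (intro sum_mono) auto
    also have "\<dots> \<le> (\<Sum>j\<in>{..<n}. max 0 y)" by (intro sum_mono2) auto
    also have "\<dots> = real n * max 0 y" by simp
    finally have B: "(\<Sum>j\<in>{..<n} - {i}. max 0 (min ((v(i := y)) i) ((v(i := y)) j))) \<le> real n * max 0 y" .
    have A: "\<bar>spa_round_pay n r (v(i := y)) z t i\<bar> \<le> 2 * \<bar>r\<bar> + (\<Sum>j\<in>{..<n} - {i}. max 0 (min ((v(i := y)) i) ((v(i := y)) j)))"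
      by (rule round_pay_bound[OF i])
    show "norm (spa_round_pay n r (v(i := y)) z t i) \<le> 2 * \<bar>r\<bar> + real n * max 0 y"
      unfolding real_norm_def using A B by linarith
  qed
qed

lemma pay_upd_int: "i < n \<Longrightarrow> integrable PN (\<lambda>v. spa_pay n T r (v(i := y)) z i)"
  unfolding spa_pay_def by (intro Bochner_Integration.integrable_sum round_pay_upd_int)

lemma alloc_upd_int: "i < n \<Longrightarrow> integrable PN (\<lambda>v. spa_alloc n r (v(i := y)) z t i)"
  by (rule PNP.integrable_const_bound[where B=1])
     (auto intro!: upd_meas alloc_meas simp: spa_alloc_nonneg spa_alloc_le1 abs_le_iff)

end


lemma sum_util_rearr:
  fixes a p :: "nat \<Rightarrow> real"
  shows "x * (\<Sum>t<T. a t) - (\<Sum>t<T. p t) = (\<Sum>t<T. x * a t - p t)"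
  by (simp add: sum_distrib_left sum_subtractf)

lemma spa_U_r_point: "r * spa_alloc n r (b(i := r)) z t i - spa_round_pay n r (b(i := r)) z t i = 0"
proof (cases "i \<in> spa_winners n r (b(i := r)) z t")
  case True
  have "spa_price n r (b(i := r)) z t i \<le> r" using spa_price_le_winner[OF True] by simp
  moreover have "r \<le> spa_price n r (b(i := r)) z t i" by (rule spa_price_ge_r)
  ultimately have "spa_price n r (b(i := r)) z t i = r" by simp
  then show ?thesis by (simp add: spa_round_pay_def)
next
  case False then show ?thesis by (simp add: spa_round_pay_def spa_alloc_def)
qed

lemma spa_low_alloc: "x < r \<Longrightarrow> spa_alloc n r (b(i := x)) z t i = 0"
  by (auto simp: spa_alloc_def spa_winners_def)

lemma gap_point:
  assumes i: "i < n" and rs: "r \<le> s"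
  shows "(if (t, i) \<in> z then 1 else 0) - spa_alloc n r (v(i := s)) z t i \<le> (\<Sum>j\<in>{..<n} - {i}. indicator {s..} (v j))"
proof (cases "(t, i) \<in> z")
  case False
  then show ?thesis using spa_alloc_nonneg[of n r "v(i := s)" z t i]
    by (simp add: spa_alloc_nonpart sum_nonneg)
next
  case part: True
  show ?thesis
  proof (cases "\<exists>j\<in>{..<n} - {i}. (t, j) \<in> z \<and> s \<le> v j")
    case True
    then obtain j where j: "j \<in> {..<n} - {i}" "s \<le> v j" by blast
    have "1 \<le> (\<Sum>j\<in>{..<n} - {i}. indicator {s..} (v j) :: real)"
    proof -
      have "(indicator {s..} (v j) :: real) \<le> (\<Sum>j\<in>{..<n} - {i}. indicator {s..} (v j))"
        by (rule member_le_sum) (use j in auto)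
      then show ?thesis using j by simp
    qed
    then show ?thesis using part spa_alloc_nonneg[of n r "v(i := s)" z t i] by simp
  next
    case False
    have "spa_winners n r (v(i := s)) z t = {i}"
    proof safe
      show "i \<in> spa_winners n r (v(i := s)) z t"
        using i part rs False by (auto simp: spa_winners_def not_le intro: less_imp_le)
      fix j assume j: "j \<in> spa_winners n r (v(i := s)) z t"
      show "j = i"
      proof (rule ccontr)
        assume ji: "j \<noteq> i"
        from j ji have "j < n" "(t, j) \<in> z" "s \<le> v j"
          using i part by (auto simp: spa_winners_def)
        then show False using False ji by auto
      qed
    qed
    then have "spa_alloc n r (v(i := s)) z t i = 1" by (simp add: spa_alloc_def)
    then show ?thesis using part by (simp add: sum_nonneg)
  qed
qed

context mech
begin

lemma adm_spa: "admissible f S \<alpha> n T (spa_alloc n r) (spa_pay n T r)"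
  unfolding admissible_def profM_def
proof (intro conjI allI impI ballI)
  show "\<And>b z t i. 0 \<le> spa_alloc n r b z t i" by (rule spa_alloc_nonneg)
  show "\<And>b z t. (\<Sum>i<n. spa_alloc n r b z t i) \<le> 1" by (rule spa_alloc_sum)
  show "\<And>b z t i. (t, i) \<notin> z \<Longrightarrow> spa_alloc n r b z t i = 0" by (rule spa_alloc_nonpart)
  show "\<And>z t i. (\<lambda>v. spa_alloc n r v z t i) \<in> borel_measurable PN" by (rule alloc_meas)
  show "\<And>z i. integrable PN (\<lambda>v. spa_pay n T r v z i)" by (rule pay_int)
  show "\<And>i y z t. i < n \<Longrightarrow> y \<in> S \<Longrightarrow> (\<lambda>v. spa_alloc n r (v(i := y)) z t i) \<in> borel_measurable PN"
    by (rule upd_meas[OF _ alloc_meas])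
  show "\<And>i y z. i < n \<Longrightarrow> y \<in> S \<Longrightarrow> integrable PN (\<lambda>v. spa_pay n T r (v(i := y)) z i)"
    by (rule pay_upd_int)
  fix i x
  assume i: "i < n" and x: "x \<in> S"
  have intg: "integrable PN (\<lambda>v. Ez \<alpha> n T (\<lambda>z. x * (\<Sum>t<T. spa_alloc n r (v(i := y)) z t i) - spa_pay n T r (v(i := y)) z i))" for y
    by (intro integrable_Ez Bochner_Integration.integrable_diff integrable_mult_right
        Bochner_Integration.integrable_sum alloc_upd_int[OF i] pay_upd_int[OF i])
  show "0 \<le> util f \<alpha> n T (spa_alloc n r) (spa_pay n T r) i x x"
    unfolding util_def profM_def
  proof (rule integral_nonneg_AE, intro AE_I2)
    fix v
    have "Ez \<alpha> n T (\<lambda>z. 0) \<le> Ez \<alpha> n T (\<lambda>z. x * (\<Sum>t<T. spa_alloc n r (v(i := x)) z t i) - spa_pay n T r (v(i := x)) z i)"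
      unfolding spa_pay_def sum_util_rearr
      by (rule Ez_mono[OF alpha]) (intro sum_nonneg spa_IR_point)
    then show "0 \<le> Ez \<alpha> n T (\<lambda>z. x * (\<Sum>t<T. spa_alloc n r (v(i := x)) z t i) - spa_pay n T r (v(i := x)) z i)"
      by (simp add: Ez_def)
  qed
  fix y assume y: "y \<in> S"
  show "util f \<alpha> n T (spa_alloc n r) (spa_pay n T r) i x y \<le> util f \<alpha> n T (spa_alloc n r) (spa_pay n T r) i x x"
    unfolding util_def profM_def
  proof (rule integral_mono[OF intg intg])
    fix v
    show "Ez \<alpha> n T (\<lambda>z. x * (\<Sum>t<T. spa_alloc n r (v(i := y)) z t i) - spa_pay n T r (v(i := y)) z i)
        \<le> Ez \<alpha> n T (\<lambda>z. x * (\<Sum>t<T. spa_alloc n r (v(i := x)) z t i) - spa_pay n T r (v(i := x)) z i)"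
      unfolding spa_pay_def sum_util_rearr
    proof (rule Ez_mono[OF alpha], rule sum_mono)
      fix z t
      show "x * spa_alloc n r (v(i := y)) z t i - spa_round_pay n r (v(i := y)) z t i
          \<le> x * spa_alloc n r (v(i := x)) z t i - spa_round_pay n r (v(i := x)) z t i"
        using spa_truthful[OF i, of x r "v(i := y)" z t] by simp
    qed
  qed
qed

abbreviation "qS \<equiv> spa_alloc n r"
abbreviation "pS \<equiv> spa_pay n T r"

lemma Qs_low: "x < r \<Longrightarrow> Qm qS i x = 0"
  unfolding Qm_def by (simp add: spa_low_alloc Ez_def)

lemma Ps_low: "x < r \<Longrightarrow> Pm pS i x = 0"
  unfolding Pm_def by (simp add: spa_low_alloc Ez_def spa_pay_def spa_round_pay_def)

lemma Us0: "i < n \<Longrightarrow> x \<in> S \<Longrightarrow> x \<le> r \<Longrightarrow> x * Qm qS i x - Pm pS i x = 0"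
proof -
  assume i: "i < n" and x: "x \<in> S" and xr: "x \<le> r"
  show ?thesis
  proof (cases "x < r")
    case True then show ?thesis by (simp add: Qs_low Ps_low)
  next
    case False
    then have xr': "x = r" using xr by simp
    have "r * Qm qS i r - Pm pS i r = util f \<alpha> n T qS pS i r r"
      using util_eq[OF adm_spa i rS, of r] by simp
    also have "\<dots> = 0"
      unfolding util_def profM_def spa_pay_def sum_util_rearr
      by (simp add: spa_U_r_point Ez_def)
    finally show ?thesis using xr' by simp
  qed
qed

definition CC :: real where "CC = Ez \<alpha> n T (\<lambda>z. 1) * real T * real n"

lemma E1_nn: "0 \<le> Ez \<alpha> n T (\<lambda>z. 1)"
  unfolding Ez_def using pweight_nn[OF alpha] by (simp add: sum_nonneg)

lemma gap:
  assumes i: "i < n" and s: "s \<in> S" and rs: "r \<le> s"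
  shows "NN i - Qm qS i s \<le> CC * h s"
proof -
  let ?D = "\<lambda>v. Ez \<alpha> n T (\<lambda>z. \<Sum>t<T. (if (t, i) \<in> z then 1 else 0) - spa_alloc n r (v(i := s)) z t i)"
  let ?B = "\<lambda>v. Ez \<alpha> n T (\<lambda>z. 1) * real T * (\<Sum>j\<in>{..<n} - {i}. indicator {s..} (v j))"
  have iQ: "integrable PN (\<lambda>v. Ez \<alpha> n T (\<lambda>z. \<Sum>t<T. spa_alloc n r (v(i := s)) z t i))"
    by (rule Ezq_int[OF adm_spa i])
  have eqD: "NN i - Qm qS i s = (\<integral>v. ?D v \<partial>PN)"
  proof -
    have "(\<integral>v. ?D v \<partial>PN) = (\<integral>v. NN i - Ez \<alpha> n T (\<lambda>z. \<Sum>t<T. spa_alloc n r (v(i := s)) z t i) \<partial>PN)"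
      unfolding NN_def by (simp add: sum_subtractf Ez_diff)
    also have "\<dots> = NN i - Qm qS i s"
      using iQ unfolding Qm_def by (simp add: prob_space.prob_space[OF PNP.prob_space_axioms])
    finally show ?thesis by simp
  qed
  have iB: "integrable PN ?B"
    by (intro integrable_mult_right Bochner_Integration.integrable_sum comp_integrable)
       (auto simp: integrable_indicator_iff less_top[symmetric] M1.emeasure_finite)
  have iD: "integrable PN ?D"
    using iQ unfolding NN_def[symmetric]
    by (simp add: sum_subtractf Ez_diff NN_def[symmetric])
  have "(\<integral>v. ?D v \<partial>PN) \<le> (\<integral>v. ?B v \<partial>PN)"
  proof (rule integral_mono[OF iD iB])
    fix v
    have "?D v \<le> Ez \<alpha> n T (\<lambda>z. \<Sum>t<T. (\<Sum>j\<in>{..<n} - {i}. indicator {s..} (v j)))"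
      by (rule Ez_mono[OF alpha], rule sum_mono, rule gap_point[OF i rs])
    also have "\<dots> = ?B v" by (subst Ez_const) (simp add: mult_ac)
    finally show "?D v \<le> ?B v" .
  qed
  also have "(\<integral>v. ?B v \<partial>PN) = Ez \<alpha> n T (\<lambda>z. 1) * real T * (\<Sum>j\<in>{..<n} - {i}. h s)"
  proof -
    have "(\<integral>v. (indicator {s..} (v j) :: real) \<partial>PN) = h s" if "j \<in> {..<n} - {i}" for j
    proof -
      have "(\<integral>v. (indicator {s..} (v j) :: real) \<partial>PN) = (\<integral>x. (indicator {s..} x :: real) \<partial>M1)"
        using comp_integral[of j "indicator {s..}"] that by simp
      then show ?thesis by (simp add: h_eq')
    qed
    moreover have "(\<integral>v. ?B v \<partial>PN) = Ez \<alpha> n T (\<lambda>z. 1) * real T * (\<Sum>j\<in>{..<n} - {i}. (\<integral>v. indicator {s..} (v j) \<partial>PN))"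
      by (subst Bochner_Integration.integral_sum[symmetric])
         (auto intro!: comp_integrable simp: integrable_indicator_iff less_top[symmetric] M1.emeasure_finite)
    ultimately show ?thesis by simp
  qed
  also have "\<dots> \<le> CC * h s"
  proof -
    have "(\<Sum>j\<in>{..<n} - {i}. h s) \<le> (\<Sum>j\<in>{..<n}. h s)" by (intro sum_mono2) (auto simp: h_nn)
    then have "(\<Sum>j\<in>{..<n} - {i}. h s) \<le> real n * h s" by simp
    then show ?thesis unfolding CC_def using E1_nn
      by (simp add: mult.assoc mult_left_mono)
  qed
  finally show ?thesis using eqD by simp
qed

lemma VS_total:
  assumes adm: "admissible f S \<alpha> n T q p"
  shows "(\<Sum>i<n. \<integral>x. f x * (g x * Qm q i x) \<partial>lborel) \<le> (\<Sum>i<n. \<integral>x. f x * (g x * Qm qS i x) \<partial>lborel)"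
proof -
  have L: "(\<Sum>i<n. \<integral>x. f x * (g x * Qm q' i x) \<partial>lborel) = (\<integral>v. (\<Sum>i<n. g (v i) * Ez \<alpha> n T (\<lambda>z. \<Sum>t<T. q' v z t i)) \<partial>PN)"
    if adm': "admissible f S \<alpha> n T q' p'" for q' p'
  proof -
    have "(\<Sum>i<n. \<integral>x. f x * (g x * Qm q' i x) \<partial>lborel) = (\<Sum>i<n. \<integral>v. g (v i) * Ez \<alpha> n T (\<lambda>z. \<Sum>t<T. q' v z t i) \<partial>PN)"
      by (rule sum.cong[OF refl]) (rule vs_form[OF adm'], simp)
    also have "\<dots> = (\<integral>v. (\<Sum>i<n. g (v i) * Ez \<alpha> n T (\<lambda>z. \<Sum>t<T. q' v z t i)) \<partial>PN)"
      by (rule Bochner_Integration.integral_sum[symmetric]) (rule vs_G_int[OF adm'], simp)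
    finally show ?thesis .
  qed
  have rearr: "(\<Sum>i<n. g (v i) * Ez \<alpha> n T (\<lambda>z. \<Sum>t<T. q' v z t i)) = Ez \<alpha> n T (\<lambda>z. \<Sum>t<T. \<Sum>i<n. g (v i) * q' v z t i)"
    for q' :: alloc and v
    by (simp add: Ez_cmult[symmetric] Ez_sum[symmetric] sum_distrib_left sum.swap[of _ "{..<T}"])
  have iq: "integrable PN (\<lambda>v. \<Sum>i<n. g (v i) * Ez \<alpha> n T (\<lambda>z. \<Sum>t<T. q' v z t i))"
    if adm': "admissible f S \<alpha> n T q' p'" for q' p'
    by (intro Bochner_Integration.integrable_sum vs_G_int[OF adm']) simp
  show ?thesis
    unfolding L[OF adm] L[OF adm_spa]
  proof (rule integral_mono_AE[OF iq[OF adm] iq[OF adm_spa]])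
    show "AE v in PN. (\<Sum>i<n. g (v i) * Ez \<alpha> n T (\<lambda>z. \<Sum>t<T. q v z t i)) \<le> (\<Sum>i<n. g (v i) * Ez \<alpha> n T (\<lambda>z. \<Sum>t<T. qS v z t i))"
      using AE_PN_S
    proof eventually_elim
      case (elim v)
      show ?case unfolding rearr
      proof (rule Ez_mono[OF alpha], rule sum_mono)
        fix z t
        show "(\<Sum>i<n. g (v i) * q v z t i) \<le> (\<Sum>i<n. g (v i) * qS v z t i)"
          by (rule vs_point[OF q0[OF adm] qsum[OF adm] qnp[OF adm] elim])
      qed
    qed
  qed
qed

lemma main_ineq:
  assumes adm: "admissible f S \<alpha> n T q p"
  shows "revenue f \<alpha> n T q p \<le> revenue f \<alpha> n T qS pS"
proof -
  have e: "\<And>q' p' i. (\<lambda>x. f x * (x * Qm q' i x - (x * Qm q' i x - Pm p' i x))) = (\<lambda>x. f x * Pm p' i x)"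
    by (simp add: fun_eq_iff)
  have "(\<Sum>i<n. \<integral>x. f x * (x * Qm q i x - (x * Qm q i x - Pm p i x)) \<partial>lborel)
      \<le> (\<Sum>i<n. \<integral>x. f x * (x * Qm qS i x - (x * Qm qS i x - Pm pS i x)) \<partial>lborel)"
  proof (rule combine[where NN=NN and C=CC])
    fix i assume i: "i < n"
    show "Qm q i \<in> borel_measurable borel" by (rule Qm_meas[OF adm i])
    show "(\<lambda>x. x * Qm q i x - Pm p i x) \<in> borel_measurable borel"
      using Qm_meas[OF adm i] Pm_meas[OF adm i] by measurable
    show "integrable lborel (\<lambda>x. f x * (x * Qm q i x - (x * Qm q i x - Pm p i x)))"
      unfolding e by (rule Pm_int[OF adm i])
    show "Qm qS i \<in> borel_measurable borel" by (rule Qm_meas[OF adm_spa i])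
    show "(\<lambda>x. x * Qm qS i x - Pm pS i x) \<in> borel_measurable borel"
      using Qm_meas[OF adm_spa i] Pm_meas[OF adm_spa i] by measurable
    show "integrable lborel (\<lambda>x. f x * (x * Qm qS i x - (x * Qm qS i x - Pm pS i x)))"
      unfolding e by (rule Pm_int[OF adm_spa i])
    fix x
    show "0 \<le> Qm q i x" "Qm q i x \<le> NN i" using Qm_bounds[OF adm i] by auto
    show "0 \<le> Qm qS i x" "Qm qS i x \<le> NN i" using Qm_bounds[OF adm_spa i] by auto
    show "x < r \<Longrightarrow> Qm qS i x = 0" by (rule Qs_low)
    assume x: "x \<in> S"
    show "0 \<le> x * Qm q i x - Pm p i x" by (rule IR_Um[OF adm i x])
    show "x \<le> r \<Longrightarrow> x * Qm qS i x - Pm pS i x = 0" by (rule Us0[OF i x])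
    show "r \<le> x \<Longrightarrow> NN i - Qm qS i x \<le> CC * h x" by (rule gap[OF i x])
    fix y assume y: "y \<in> S"
    show "x \<le> y \<Longrightarrow> Qm q i x \<le> Qm q i y" by (rule Qm_mono[OF adm i x y])
    show "x \<le> y \<Longrightarrow> Qm qS i x \<le> Qm qS i y" by (rule Qm_mono[OF adm_spa i x y])
    show "y * Qm q i y - Pm p i y + (x - y) * Qm q i y \<le> x * Qm q i x - Pm p i x" by (rule IC_Um[OF adm i x y])
    show "y * Qm qS i y - Pm pS i y + (x - y) * Qm qS i y \<le> x * Qm qS i x - Pm pS i x" by (rule IC_Um[OF adm_spa i x y])
  next
    show "(\<Sum>i<n. \<integral>x. f x * (g x * Qm q i x) \<partial>lborel) \<le> (\<Sum>i<n. \<integral>x. f x * (g x * Qm qS i x) \<partial>lborel)"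
      by (rule VS_total[OF adm])
  qed
  then show ?thesis unfolding revenue_eq[OF adm] revenue_eq[OF adm_spa] e .
qed

end


theorem theorem1:
  fixes f :: "real \<Rightarrow> real" and S :: "real set" and \<alpha> :: "nat \<Rightarrow> real"
    and n T :: nat and r :: real
  assumes "1 \<le> n"
    and "\<forall>i<n. 0 \<le> \<alpha> i \<and> \<alpha> i \<le> 1"
    and "density_with_support f S"
    and "regular f S"
    and "r \<in> S" and "virt f r = 0"
  shows "(\<forall>r'\<in>S. virt f r' = 0 \<longrightarrow> r' = r)
    \<and> (\<forall>b z t i v. i < n \<longrightarrow>
          v * spa_alloc n r b z t i - spa_round_pay n r b z t i
          \<le> v * spa_alloc n r (b(i := v)) z t i - spa_round_pay n r (b(i := v)) z t i)
    \<and> admissible f S \<alpha> n T (spa_alloc n r) (spa_pay n T r)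
    \<and> (\<forall>q p. admissible f S \<alpha> n T q p \<longrightarrow>
          revenue f \<alpha> n T q p \<le> revenue f \<alpha> n T (spa_alloc n r) (spa_pay n T r))"
proof -
  interpret M: mech f S r \<alpha> n T
    by (unfold_locales) (use assms in auto)
  show ?thesis
  proof (intro conjI allI impI ballI)
    show "\<And>r'. r' \<in> S \<Longrightarrow> virt f r' = 0 \<Longrightarrow> r' = r" by (rule M.uniq)
    show "\<And>b z t i v. i < n \<Longrightarrow> v * spa_alloc n r b z t i - spa_round_pay n r b z t i
          \<le> v * spa_alloc n r (b(i := v)) z t i - spa_round_pay n r (b(i := v)) z t i"
      by (rule spa_truthful)
    show "admissible f S \<alpha> n T (spa_alloc n r) (spa_pay n T r)" by (rule M.adm_spa)
    show "\<And>q p. admissible f S \<alpha> n T q p \<Longrightarrow> revenue f \<alpha> n T q p \<le> revenue f \<alpha> n T (spa_alloc n r) (spa_pay n T r)"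
      by (rule M.main_ineq)
  qed
qed


end
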